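(* Let $d\ge2$, $\gamma>0$, $z\in\mathbb C$ with $\Re z\ge0$, and $0\ne k\in\gamma\mathbb Z^d$. Then $$\Re(c_0(z,k))\le1-\phi_0(\gamma,d),\qquad |c_1(z,k)|\le\frac1{2\sqrt d}+\frac1\gamma,\qquad d\,|c_2(z,k)|\le1-\alpha_2(d,\varepsilon)\,\phi_2(\varepsilon\gamma)\quad\text{for all }0<\varepsilon<1,$$ where $\phi_0(\cdot,d):[0,\infty)\to[0,1)$ is a continuous nondecreasing function (depending only on $d$) with $\phi_0(0,d)=0$ and $\phi_0(\gamma,d)\to1$ as $\gamma\to\infty$, and $\phi_2(u)=1-(1+u^2)^{-1/2}$. Moreover, $\varepsilon\mapsto\alpha_2(d,\varepsilon)$ is continuous and strictly decreasing on $[0,1]$ with $\alpha_2(d,0)=1/2$ and $\alpha_2(d,1)=0$.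
   Context: $\mathbb S^{d-1}$ unit sphere with surface measure $d\omega$, $M_0=|\mathbb S^{d-1}|^{-1}$, $\gamma\mathbb Z^d=\{\gamma k':k'\in\mathbb Z^d\}$, $\omega_1$ the first coordinate of $\omega$. Define $$c_j(z,k)=\int_{\mathbb S^{d-1}}\frac{\omega_1^jM_0}{1+z+i|k|\omega_1}\,d\omega,\ j=0,1,2,\qquad \alpha_2(d,\varepsilon)=d\int_{\{\omega\in\mathbb S^{d-1}:\,\omega_1\ge\varepsilon\}}\omega_1^2M_0\,d\omega.$$ *)

theory Defs
  imports "HOL-Analysis.Analysis"
begin

text \<open>Average of a function over the unit sphere S^{d-1} in R^d with respect to the
  normalized surface measure M0 d omega.  Since the library has no surface measure on
  the sphere, we use the standard construction of the normalized surface measure as the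
  push-forward of the normalized Lebesgue measure on the unit ball under x |-> x/|x|.\<close>
definition sph_avg :: "(real^('n::finite) \<Rightarrow> 'b::{banach, second_countable_topology}) \<Rightarrow> 'b" where
  "sph_avg f = (1 / measure lebesgue (ball (0::real^'n) 1)) *\<^sub>R
      integral\<^sup>L (lebesgue_on (ball (0::real^'n) 1)) (\<lambda>x. f (x /\<^sub>R norm x))"

definition scaled_lattice :: "real \<Rightarrow> (real^('n::finite)) set" where
  "scaled_lattice \<gamma> = {k. \<forall>j. \<exists>m::int. k $ j = \<gamma> * of_int m}"

definition cj :: "'n::finite \<Rightarrow> nat \<Rightarrow> complex \<Rightarrow> real^'n \<Rightarrow> complex" where
  "cj i1 j z k = sph_avg (\<lambda>\<omega>::real^'n.
      complex_of_real ((\<omega> $ i1) ^ j) / (1 + z + \<i> * complex_of_real (norm k * (\<omega> $ i1))))"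

definition alpha2 :: "'n::finite \<Rightarrow> real \<Rightarrow> real" where
  "alpha2 i1 \<epsilon> = real CARD('n) *
      sph_avg (\<lambda>\<omega>::real^'n. if \<omega> $ i1 \<ge> \<epsilon> then (\<omega> $ i1)^2 else 0)"

definition phi2 :: "real \<Rightarrow> real" where
  "phi2 u = 1 - 1 / sqrt (1 + u^2)"

end

theory Submission
  imports Defs
begin

definition omg :: "real^'n::finite \<Rightarrow> real^'n" where "omg x = x /\<^sub>R norm x"

lemma omg_meas[measurable]: "omg \<in> borel_measurable borel"
  unfolding omg_def by measurable

lemma norm_omg_le: "norm (omg x) \<le> 1"
  by (cases "x = 0") (auto simp: omg_def)

lemma norm_omg: "x \<noteq> 0 \<Longrightarrow> norm (omg x) = 1"
  by (auto simp: omg_def)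

lemma omg_0[simp]: "omg 0 = 0"
  by (simp add: omg_def)

lemma omg_comp_le: "\<bar>omg x $ i\<bar> \<le> 1"
  using component_le_norm_cart[of "omg x" i] norm_omg_le[of x] by linarith

lemma ball_borel[measurable]: "ball (0::real^'n::finite) 1 \<in> sets borel"
  by simp

lemma meas_comp_omg[measurable]:
  "f \<in> borel_measurable borel \<Longrightarrow> (\<lambda>x. f (omg x)) \<in> borel_measurable lborel"
  unfolding measurable_lborel2 by (rule measurable_compose[OF omg_meas])

lemma int_ball_ind: "integrable lborel (indicat_real (ball (0::real^'n::finite) 1))"
  using emeasure_bounded_finite[of "ball (0::real^'n) 1"]
  by (intro integrable_real_indicator) auto

definition II :: "(real^'n::finite \<Rightarrow> 'b::{banach,second_countable_topology}) \<Rightarrow> 'b" where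
  "II f = integral\<^sup>L lborel (\<lambda>x. indicator (ball (0::real^'n) 1) x *\<^sub>R f (omg x))"

definition VV :: "'n::finite itself \<Rightarrow> real" where
  "VV _ = measure lborel (ball (0::real^'n) 1)"

lemma VV_pos: "VV TYPE('n::finite) > 0"
proof -
  have "measure lebesgue (ball (0::real^'n) 1) > 0" using content_ball_pos[of 1 "0::real^'n"] by simp
  then show ?thesis unfolding VV_def by (simp add: measure_completion)
qed

lemma sph_avg_II:
  fixes f :: "real^'n::finite \<Rightarrow> 'b::{banach,second_countable_topology}"
  assumes [measurable]: "f \<in> borel_measurable borel"
  shows "sph_avg f = (1 / VV TYPE('n)) *\<^sub>R II f"
proof -
  have "integral\<^sup>L (lebesgue_on (ball (0::real^'n) 1)) (\<lambda>x. f (x /\<^sub>R norm x))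
     = integral\<^sup>L lebesgue (\<lambda>x. indicator (ball (0::real^'n) 1) x *\<^sub>R f (omg x))"
    by (subst integral_restrict_space) (auto simp: omg_def)
  also have "\<dots> = II f" unfolding II_def
    by (rule integral_completion) measurable
  finally show ?thesis
    by (simp add: sph_avg_def VV_def measure_completion)
qed

lemma II_integrable:
  fixes f :: "real^'n::finite \<Rightarrow> 'b::{banach,second_countable_topology}"
  assumes [measurable]: "f \<in> borel_measurable borel"
    and bnd: "\<And>w. norm w \<le> 1 \<Longrightarrow> norm (f w) \<le> C"
  shows "integrable lborel (\<lambda>x. indicator (ball (0::real^'n) 1) x *\<^sub>R f (omg x))"
proof -
  have "integrable lborel (\<lambda>x. indicator (ball (0::real^'n) 1) x * C)"
    using emeasure_bounded_finite[of "ball (0::real^'n) 1"]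
    by (intro integrable_mult_left integrable_real_indicator) auto
  then show ?thesis
  proof (rule Bochner_Integration.integrable_bound)
  show "(\<lambda>x. indicator (ball (0::real^'n) 1) x *\<^sub>R f (omg x)) \<in> borel_measurable lborel" by measurable
  show "AE x in lborel. norm (indicator (ball (0::real^'n) 1) x *\<^sub>R f (omg x)) \<le> norm (indicator (ball (0::real^'n) 1) x * C)"
    using bnd[OF norm_omg_le] by (auto simp: indicator_def intro: order_trans[OF _ abs_ge_self])
  qed
qed

definition bmf :: "(real^'n::finite \<Rightarrow> 'b::{banach,second_countable_topology}) \<Rightarrow> bool" where
  "bmf f \<longleftrightarrow> f \<in> borel_measurable borel \<and> (\<exists>C. \<forall>w. norm w \<le> 1 \<longrightarrow> norm (f w) \<le> C)"

lemma bmfI: "f \<in> borel_measurable borel \<Longrightarrow> (\<And>w. norm w \<le> 1 \<Longrightarrow> norm (f w) \<le> C) \<Longrightarrow> bmf f"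
  unfolding bmf_def by blast

lemma bmf_int: "bmf f \<Longrightarrow> integrable lborel (\<lambda>x. indicator (ball (0::real^'n::finite) 1) x *\<^sub>R f (omg x))"
  unfolding bmf_def using II_integrable by blast

lemma bmf_meas: "bmf f \<Longrightarrow> f \<in> borel_measurable borel"
  unfolding bmf_def by blast

lemma sph_avg_add:
  fixes f g :: "real^'n::finite \<Rightarrow> 'b::{banach,second_countable_topology}"
  assumes "bmf f" "bmf g"
  shows "sph_avg (\<lambda>w. f w + g w) = sph_avg f + sph_avg g"
proof -
  have m: "(\<lambda>w. f w + g w) \<in> borel_measurable borel" using assms bmf_meas by measurable
  have "II (\<lambda>w. f w + g w) = II f + II g"
    unfolding II_def using bmf_int[OF assms(1)] bmf_int[OF assms(2)]
    by (simp add: scaleR_add_right)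
  then show ?thesis using m bmf_meas[OF assms(1)] bmf_meas[OF assms(2)]
    by (simp add: sph_avg_II scaleR_add_right)
qed

lemma sph_avg_diff:
  fixes f g :: "real^'n::finite \<Rightarrow> 'b::{banach,second_countable_topology}"
  assumes "bmf f" "bmf g"
  shows "sph_avg (\<lambda>w. f w - g w) = sph_avg f - sph_avg g"
proof -
  have m: "(\<lambda>w. f w - g w) \<in> borel_measurable borel" using assms bmf_meas by measurable
  have "II (\<lambda>w. f w - g w) = II f - II g"
    unfolding II_def using bmf_int[OF assms(1)] bmf_int[OF assms(2)]
    by (simp add: scaleR_diff_right)
  then show ?thesis using m bmf_meas[OF assms(1)] bmf_meas[OF assms(2)]
    by (simp add: sph_avg_II scaleR_diff_right)
qed

lemma sph_avg_scaleR:
  fixes f :: "real^'n::finite \<Rightarrow> 'b::{banach,second_countable_topology}"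
  assumes "f \<in> borel_measurable borel"
  shows "sph_avg (\<lambda>w. c *\<^sub>R f w) = c *\<^sub>R sph_avg f"
proof -
  have m: "(\<lambda>w. c *\<^sub>R f w) \<in> borel_measurable borel" using assms by measurable
  have "II (\<lambda>w. c *\<^sub>R f w) = c *\<^sub>R II f"
    unfolding II_def
    by (subst scaleR_left_commute) (rule integral_scaleR_right)
  then show ?thesis using m assms by (simp add: sph_avg_II scaleR_left_commute)
qed

lemma sph_avg_const: "sph_avg (\<lambda>w::real^'n::finite. c) = c"
proof -
  have "II (\<lambda>w::real^'n. c) = VV TYPE('n) *\<^sub>R c"
    unfolding II_def VV_def by (subst integral_scaleR_left) (auto simp: int_ball_ind)
  then show ?thesis using VV_pos[where 'n='n] by (simp add: sph_avg_II)
qed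

lemma sph_avg_mono:
  fixes f g :: "real^'n::finite \<Rightarrow> real"
  assumes "bmf f" "bmf g" "\<And>w. norm w \<le> 1 \<Longrightarrow> f w \<le> g w"
  shows "sph_avg f \<le> sph_avg g"
proof -
  have "II f \<le> II g"
    unfolding II_def using bmf_int[OF assms(1)] bmf_int[OF assms(2)]
    by (intro integral_mono) (auto simp: indicator_def intro: assms(3)[OF norm_omg_le])
  then show ?thesis using bmf_meas[OF assms(1)] bmf_meas[OF assms(2)] VV_pos[where 'n='n]
    by (simp add: sph_avg_II divide_right_mono)
qed

lemma sph_avg_norm:
  fixes f :: "real^'n::finite \<Rightarrow> 'b::{banach,second_countable_topology}" and g :: "real^'n \<Rightarrow> real"
  assumes "bmf f" "bmf g" "\<And>w. norm w \<le> 1 \<Longrightarrow> norm (f w) \<le> g w"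
  shows "norm (sph_avg f) \<le> sph_avg g"
proof -
  have "norm (II f) \<le> II g"
    unfolding II_def using bmf_int[OF assms(1)] bmf_int[OF assms(2)]
    by (intro Bochner_Integration.integral_norm_bound_integral) (auto simp: indicator_def intro: assms(3)[OF norm_omg_le])
  then show ?thesis using bmf_meas[OF assms(1)] bmf_meas[OF assms(2)] VV_pos[where 'n='n]
    by (simp add: sph_avg_II divide_right_mono)
qed

lemma sph_avg_Re:
  fixes f :: "real^'n::finite \<Rightarrow> complex"
  assumes "bmf f"
  shows "Re (sph_avg f) = sph_avg (\<lambda>w. Re (f w))"
proof -
  have m: "(\<lambda>w. Re (f w)) \<in> borel_measurable borel" using bmf_meas[OF assms] by measurable
  have "Re (II f) = II (\<lambda>w. Re (f w))"
    unfolding II_def using integral_bounded_linear[OF bounded_linear_Re bmf_int[OF assms]]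
    by simp
  then show ?thesis using m bmf_meas[OF assms] by (simp add: sph_avg_II)
qed

lemma prod_Basis_cart: "(\<Prod>b\<in>(Basis::(real^'n::finite) set). f b) = (\<Prod>i\<in>UNIV. f (axis i 1))"
proof -
  have B: "(Basis::(real^'n) set) = range (\<lambda>i. axis i 1)"
    by (auto simp: Basis_vec_def)
  have "inj (\<lambda>i::'n. axis i (1::real))"
    by (auto simp: inj_def axis_eq_axis)
  then show ?thesis unfolding B by (simp add: prod.reindex)
qed

lemma lborel_perm_sign:
  fixes p :: "'n::finite \<Rightarrow> 'n" and s :: "'n \<Rightarrow> real"
  assumes p: "bij p" and s: "\<And>i. s i = 1 \<or> s i = -1"
  shows "distr lborel borel (\<lambda>x::real^'n. \<chi> i. s i * x $ p i) = lborel"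
proof (rule lborel_eqI[symmetric])
  define T where "T = (\<lambda>x::real^'n. \<chi> i. s i * x $ p i)"
  define q where "q = inv p"
  have pq: "p (q j) = j" for j unfolding q_def using p by (simp add: bij_def surj_f_inv_f)
  have qp: "q (p j) = j" for j unfolding q_def using p by (simp add: bij_def inv_f_f)
  have bq: "bij q" unfolding q_def using p by (simp add: bij_imp_bij_inv)
  have Tm[measurable]: "T \<in> borel_measurable borel"
  proof -
    have "linear T" unfolding T_def by (auto simp: linear_iff vec_eq_iff algebra_simps)
    then have "bounded_linear T" by (simp add: linear_conv_bounded_linear)
    then show ?thesis by (intro borel_measurable_continuous_onI linear_continuous_on)
  qed
  fix l u :: "real^'n"
  assume le: "\<And>b. b \<in> Basis \<Longrightarrow> l \<bullet> b \<le> u \<bullet> b"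
  have le': "l $ i \<le> u $ i" for i using le[of "axis i 1"] by (simp add: inner_axis)
  define l' where "l' = (\<chi> j. if s (q j) = 1 then l $ q j else - u $ q j)"
  define u' where "u' = (\<chi> j. if s (q j) = 1 then u $ q j else - l $ q j)"
  have pre: "T -` box l u = box l' u'"
  proof (rule set_eqI)
    fix x :: "real^'n"
    have "x \<in> T -` box l u \<longleftrightarrow> (\<forall>i. l $ i < s i * x $ p i \<and> s i * x $ p i < u $ i)"
      by (simp add: T_def mem_box_cart)
    also have "\<dots> \<longleftrightarrow> (\<forall>j. l $ q j < s (q j) * x $ j \<and> s (q j) * x $ j < u $ q j)"
      by (metis pq qp)
    also have "\<dots> \<longleftrightarrow> x \<in> box l' u'"
    proof -
      have "(l $ q j < s (q j) * x $ j \<and> s (q j) * x $ j < u $ q j) \<longleftrightarrow> (l' $ j < x $ j \<and> x $ j < u' $ j)" for j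
        using s[of "q j"] unfolding l'_def u'_def by auto
      then show ?thesis unfolding mem_box_cart by blast
    qed
    finally show "x \<in> T -` box l u \<longleftrightarrow> x \<in> box l' u'" .
  qed
  have "emeasure (distr lborel borel T) (box l u) = emeasure lborel (box l' u')"
    by (subst emeasure_distr) (auto simp: pre)
  also have "\<dots> = (\<Prod>b\<in>Basis. (u' - l') \<bullet> b)"
  proof -
    have "\<forall>b\<in>Basis. l' \<bullet> b \<le> u' \<bullet> b"
    proof
      fix b :: "real^'n" assume "b \<in> Basis"
      then obtain i where b: "b = axis i 1" by (auto simp: Basis_vec_def)
      show "l' \<bullet> b \<le> u' \<bullet> b" using s[of "q i"] le'[of "q i"] unfolding b l'_def u'_def by (auto simp: inner_axis)
    qed
    then show ?thesis by (simp add: emeasure_lborel_box_eq)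
  qed
  also have "\<dots> = (\<Prod>j\<in>UNIV. u $ q j - l $ q j)"
  proof -
    have "(u' - l') $ j = u $ q j - l $ q j" for j using s[of "q j"] unfolding l'_def u'_def by auto
    then show ?thesis by (simp add: prod_Basis_cart inner_axis)
  qed
  also have "\<dots> = (\<Prod>i\<in>UNIV. u $ i - l $ i)"
    using prod.reindex_bij_betw[of q UNIV UNIV "\<lambda>i. u $ i - l $ i"] bq by (simp add: bij_betw_def)
  also have "\<dots> = (\<Prod>b\<in>Basis. (u - l) \<bullet> b)"
    by (simp add: prod_Basis_cart inner_axis)
  finally show "emeasure (distr lborel borel (\<lambda>x::real^'n. \<chi> i. s i * x $ p i)) (box l u) = (\<Prod>b\<in>Basis. (u - l) \<bullet> b)"
    unfolding T_def .
qed simp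

lemma norm_perm_sign:
  fixes p :: "'n::finite \<Rightarrow> 'n" and s :: "'n \<Rightarrow> real"
  assumes p: "bij p" and s: "\<And>i. s i = 1 \<or> s i = -1"
  shows "norm (\<chi> i. s i * x $ p i) = norm (x::real^'n)"
proof -
  have "(\<Sum>i\<in>UNIV. (s i * x $ p i) * (s i * x $ p i)) = (\<Sum>i\<in>UNIV. x $ p i * x $ p i)"
    by (rule sum.cong) (use s in \<open>auto simp: algebra_simps\<close>, metis mult_1 mult_minus1 minus_mult_minus)
  also have "\<dots> = (\<Sum>i\<in>UNIV. x $ i * x $ i)"
    using sum.reindex_bij_betw[of p UNIV UNIV "\<lambda>i. x $ i * x $ i"] p by (simp add: bij_betw_def)
  finally show ?thesis by (simp add: norm_eq_sqrt_inner inner_vec_def)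
qed

lemma sph_avg_perm_sign:
  fixes p :: "'n::finite \<Rightarrow> 'n" and s :: "'n \<Rightarrow> real"
    and f :: "real^'n \<Rightarrow> 'b::{banach,second_countable_topology}"
  assumes p: "bij p" and s: "\<And>i. s i = 1 \<or> s i = -1" and f[measurable]: "f \<in> borel_measurable borel"
  shows "sph_avg (\<lambda>w. f (\<chi> i. s i * w $ p i)) = sph_avg f"
proof -
  define T where "T = (\<lambda>x::real^'n. \<chi> i. s i * x $ p i)"
  have lin: "linear T" unfolding T_def by (auto simp: linear_iff vec_eq_iff algebra_simps)
  then have "bounded_linear T" by (simp add: linear_conv_bounded_linear)
  then have Tm[measurable]: "T \<in> borel_measurable borel"
    by (intro borel_measurable_continuous_onI linear_continuous_on)
  have nT: "norm (T x) = norm x" for x unfolding T_def by (rule norm_perm_sign[OF p s])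
  have Tomg: "T (omg x) = omg (T x)" for x
    unfolding omg_def nT using lin by (simp add: linear_scale)
  have fT[measurable]: "(\<lambda>w. f (T w)) \<in> borel_measurable borel" by measurable
  have "II (\<lambda>w. f (T w)) = integral\<^sup>L lborel (\<lambda>x. (\<lambda>y. indicator (ball (0::real^'n) 1) y *\<^sub>R f (omg y)) (T x))"
    unfolding II_def Tomg by (simp add: indicator_def nT)
  also have "\<dots> = integral\<^sup>L (distr lborel borel T) (\<lambda>y. indicator (ball (0::real^'n) 1) y *\<^sub>R f (omg y))"
    by (rule integral_distr[symmetric]) (auto simp: measurable_lborel2)
  also have "\<dots> = II f"
    unfolding II_def T_def lborel_perm_sign[OF p s] ..
  finally show ?thesis using fT f unfolding T_def by (simp add: sph_avg_II)
qed

lemma norm_sq_cart: "(norm (x::real^'n::finite))\<^sup>2 = (\<Sum>i\<in>UNIV. (x $ i)\<^sup>2)"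
  unfolding power2_norm_eq_inner inner_vec_def by (simp add: power2_eq_square)

lemma two_comp_le: "i \<noteq> j \<Longrightarrow> (x $ i)\<^sup>2 + (x $ j)\<^sup>2 \<le> (norm (x::real^'n::finite))\<^sup>2"
proof -
  assume "i \<noteq> j"
  then have "(x $ i)\<^sup>2 + (x $ j)\<^sup>2 = (\<Sum>k\<in>{i,j}. (x $ k)\<^sup>2)" by simp
  also have "\<dots> \<le> (\<Sum>k\<in>UNIV. (x $ k)\<^sup>2)" by (rule sum_mono2) auto
  finally show ?thesis by (simp add: norm_sq_cart)
qed

lemma negligible_AE:
  assumes "negligible S" "\<And>x. \<not> P x \<Longrightarrow> x \<in> S"
  shows "AE x in (lborel::('a::euclidean_space) measure). P x"
proof -
  from assms(1) have "S \<in> null_sets (completion lborel)" by (simp add: negligible_iff_null_sets)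
  then obtain N where N: "N \<in> null_sets lborel" "S \<subseteq> N" by (auto simp: null_sets_completion_iff2)
  show ?thesis by (rule AE_I'[OF N(1)]) (use assms(2) N(2) in auto)
qed

lemma exists_other: "CARD('n::finite) \<ge> 2 \<Longrightarrow> \<exists>j::'n. j \<noteq> i"
proof (rule ccontr)
  assume "CARD('n) \<ge> 2" "\<not> (\<exists>j::'n. j \<noteq> i)"
  then have "(UNIV::'n set) = {i}" by auto
  then have "card (UNIV::'n set) = card {i}" by (simp only:)
  then have "card (UNIV::'n set) = 1" by simp
  with \<open>CARD('n) \<ge> 2\<close> show False by simp
qed

lemma level_null:
  fixes i1 :: "'n::finite"
  assumes card: "CARD('n) \<ge> 2"
  shows "AE x in lborel. omg (x::real^'n) $ i1 \<noteq> t"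
proof -
  consider "\<bar>t\<bar> > 1" | "\<bar>t\<bar> = 1" | "\<bar>t\<bar> < 1" by linarith
  then show ?thesis
  proof cases
    case 1
    show ?thesis
    proof (intro AE_I2)
      fix x :: "real^'n" show "omg x $ i1 \<noteq> t" using omg_comp_le[of x i1] 1 by auto
    qed
  next
    case 2
    obtain j :: 'n where j: "j \<noteq> i1" using exists_other[OF card] by blast
    show ?thesis
    proof (rule negligible_AE)
      show "negligible {x::real^'n. axis j 1 \<bullet> x = 0}"
        by (rule negligible_hyperplane) (simp add: axis_eq_0_iff)
      fix x :: "real^'n" assume "\<not> omg x $ i1 \<noteq> t"
      then have t: "omg x $ i1 = t" by simp
      then have "x \<noteq> 0" using 2 by auto
      then have "norm (omg x) = 1" by (rule norm_omg)
      then have "(omg x $ i1)\<^sup>2 + (omg x $ j)\<^sup>2 \<le> 1" using two_comp_le[OF j[symmetric], of "omg x"] by simp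
      moreover have "(omg x $ i1)\<^sup>2 = \<bar>t\<bar>\<^sup>2" using t by simp
      then have "(omg x $ i1)\<^sup>2 = 1" using 2 by simp
      ultimately have "omg x $ j = 0" by simp
      then have "x $ j = 0" using \<open>x \<noteq> 0\<close> by (simp add: omg_def)
      then show "x \<in> {x::real^'n. axis j 1 \<bullet> x = 0}" by (simp add: inner_axis')
    qed
  next
    case 3
    define e :: "real^'n" where "e = axis i1 1"
    define c where "c = t / sqrt (1 - t\<^sup>2)"
    define F where "F = (\<lambda>h::real^'n. h + (c * norm h) *\<^sub>R e)"
    define H where "H = {x::real^'n. e \<bullet> x = 0}"
    have s1: "sqrt (1 - t\<^sup>2) > 0" using 3 by (simp add: abs_square_less_1)
    show ?thesis
    proof (rule negligible_AE)
      show "negligible (F ` H)"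
      proof (rule negligible_locally_Lipschitz_image)
        show "negligible H" unfolding H_def e_def by (rule negligible_hyperplane) (simp add: axis_eq_0_iff)
        fix x assume "x \<in> H"
        show "\<exists>T B. open T \<and> x \<in> T \<and> (\<forall>y\<in>H \<inter> T. norm (F y - F x) \<le> B * norm (y - x))"
        proof (intro exI conjI ballI)
          fix y assume "y \<in> H \<inter> UNIV"
          have "norm (F y - F x) = norm ((y - x) + (c * (norm y - norm x)) *\<^sub>R e)"
            unfolding F_def by (simp add: algebra_simps)
          also have "\<dots> \<le> norm (y - x) + \<bar>c\<bar> * \<bar>norm y - norm x\<bar>"
            by (rule order_trans[OF norm_triangle_ineq]) (simp add: e_def abs_mult)
          also have "\<dots> \<le> norm (y - x) + \<bar>c\<bar> * norm (y - x)"
            by (intro add_left_mono mult_left_mono norm_triangle_ineq3) auto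
          finally show "norm (F y - F x) \<le> (1 + \<bar>c\<bar>) * norm (y - x)" by (simp add: algebra_simps)
        qed auto
      qed auto
      fix x :: "real^'n" assume "\<not> omg x $ i1 \<noteq> t"
      then have t: "omg x $ i1 = t" by simp
      define h where "h = x - (x $ i1) *\<^sub>R e"
      have hH: "h \<in> H" unfolding H_def h_def e_def by (simp add: inner_axis' inner_diff_right)
      have xh: "x = h + (x $ i1) *\<^sub>R e" unfolding h_def by simp
      have "orthogonal h ((x $ i1) *\<^sub>R e)" using hH unfolding H_def orthogonal_def
        by (simp add: inner_commute)
      then have pyth: "(norm x)\<^sup>2 = (norm h)\<^sup>2 + (x $ i1)\<^sup>2"
        by (subst xh, subst norm_add_Pythagorean) (auto simp: e_def)
      have x1: "x $ i1 = t * norm x"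
      proof (cases "x = 0")
        case True then show ?thesis using t by simp
      next
        case False then show ?thesis using t by (simp add: omg_def field_simps)
      qed
      have "(norm h)\<^sup>2 = (norm x)\<^sup>2 * (1 - t\<^sup>2)" using pyth x1 by (simp add: power_mult_distrib algebra_simps)
      then have "sqrt ((norm h)\<^sup>2) = sqrt ((norm x)\<^sup>2 * (1 - t\<^sup>2))" by simp
      then have "norm h = norm x * sqrt (1 - t\<^sup>2)" by (simp add: real_sqrt_mult)
      then have "c * norm h = x $ i1" using s1 x1 by (simp add: c_def)
      then have "x = F h" unfolding F_def using xh by simp
      then show "x \<in> F ` H" using hH by blast
    qed
  qed
qed

lemma bmf_add: "bmf f \<Longrightarrow> bmf g \<Longrightarrow> bmf (\<lambda>w. f w + g w)"
  unfolding bmf_def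
proof (elim conjE exE, intro conjI)
  fix C D assume [measurable]: "f \<in> borel_measurable borel" "g \<in> borel_measurable borel"
    and C: "\<forall>w. norm w \<le> 1 \<longrightarrow> norm (f w) \<le> C" and D: "\<forall>w. norm w \<le> 1 \<longrightarrow> norm (g w) \<le> D"
  show "(\<lambda>w. f w + g w) \<in> borel_measurable borel" by measurable
  show "\<exists>E. \<forall>w. norm w \<le> 1 \<longrightarrow> norm (f w + g w) \<le> E"
    using C D by (intro exI[of _ "C + D"]) (auto intro: order_trans[OF norm_triangle_ineq] add_mono)
qed

lemma bmf_diff: "bmf f \<Longrightarrow> bmf g \<Longrightarrow> bmf (\<lambda>w. f w - g w)"
  unfolding bmf_def
proof (elim conjE exE, intro conjI)
  fix C D assume [measurable]: "f \<in> borel_measurable borel" "g \<in> borel_measurable borel"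
    and C: "\<forall>w. norm w \<le> 1 \<longrightarrow> norm (f w) \<le> C" and D: "\<forall>w. norm w \<le> 1 \<longrightarrow> norm (g w) \<le> D"
  show "(\<lambda>w. f w - g w) \<in> borel_measurable borel" by measurable
  show "\<exists>E. \<forall>w. norm w \<le> 1 \<longrightarrow> norm (f w - g w) \<le> E"
    using C D by (intro exI[of _ "C + D"]) (auto intro: order_trans[OF norm_triangle_ineq4] add_mono)
qed

lemma sph_avg_sum:
  fixes f :: "'i \<Rightarrow> real^'n::finite \<Rightarrow> 'b::{banach,second_countable_topology}"
  assumes "finite S" "\<And>j. j \<in> S \<Longrightarrow> bmf (f j)"
  shows "sph_avg (\<lambda>w. \<Sum>j\<in>S. f j w) = (\<Sum>j\<in>S. sph_avg (f j)) \<and> bmf (\<lambda>w. \<Sum>j\<in>S. f j w)"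
  using assms
proof (induction S rule: finite_induct)
  case empty
  then show ?case using sph_avg_const[of "0::'b"] by (auto intro!: bmfI[where C=0])
next
  case (insert x F)
  then have ih: "sph_avg (\<lambda>w. \<Sum>j\<in>F. f j w) = (\<Sum>j\<in>F. sph_avg (f j))" "bmf (\<lambda>w. \<Sum>j\<in>F. f j w)"
    and fx: "bmf (f x)" by auto
  show ?case using insert(1,2) sph_avg_add[OF fx ih(2)] bmf_add[OF fx ih(2)] ih(1) by simp
qed

lemma bmf_comp_sq: "bmf (\<lambda>w::real^'n::finite. (w $ j)\<^sup>2)"
proof (rule bmfI[where C=1])
  show "(\<lambda>w::real^'n. (w $ j)\<^sup>2) \<in> borel_measurable borel" by measurable
  fix w :: "real^'n" assume "norm w \<le> 1"
  then have "\<bar>w $ j\<bar> \<le> 1" using component_le_norm_cart[of w j] by linarith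
  then show "norm ((w $ j)\<^sup>2) \<le> 1" using power_le_one[OF abs_ge_zero \<open>\<bar>w $ j\<bar> \<le> 1\<close>, of 2] by simp
qed

definition sw :: "'n \<Rightarrow> 'n \<Rightarrow> 'n \<Rightarrow> 'n" where
  "sw a b i = (if i = a then b else if i = b then a else i)"

lemma bij_sw: "bij (sw a b)"
proof -
  have "sw a b (sw a b i) = i" for i by (auto simp: sw_def)
  show ?thesis
  proof (rule bijI)
    show "inj (sw a b)" by (rule injI) (metis \<open>\<And>i. sw a b (sw a b i) = i\<close>)
    show "surj (sw a b)" by (metis \<open>\<And>i. sw a b (sw a b i) = i\<close> surjI)
  qed
qed

lemma sph_avg_norm_sq: "sph_avg (\<lambda>w::real^'n::finite. (norm w)\<^sup>2) = 1"
proof -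
  have "II (\<lambda>w::real^'n. (norm w)\<^sup>2) = integral\<^sup>L lborel (indicat_real (ball (0::real^'n) 1))"
    unfolding II_def
  proof (rule integral_cong_AE)
    show "AE x in lborel. indicat_real (ball (0::real^'n) 1) x *\<^sub>R (norm (omg x))\<^sup>2 = indicat_real (ball 0 1) x"
      using AE_lborel_singleton[of "0::real^'n"] by eventually_elim (simp add: norm_omg)
  qed auto
  also have "\<dots> = VV TYPE('n)" by (simp add: VV_def)
  finally show ?thesis using VV_pos[where 'n='n] by (simp add: sph_avg_II)
qed

lemma second_moment: "sph_avg (\<lambda>w::real^'n::finite. (w $ i1)\<^sup>2) = 1 / real CARD('n)"
proof -
  have eq: "sph_avg (\<lambda>w::real^'n. (w $ j)\<^sup>2) = sph_avg (\<lambda>w::real^'n. (w $ i1)\<^sup>2)" for j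
  proof -
    have "sph_avg (\<lambda>w::real^'n. ((\<chi> i. 1 * w $ sw i1 j i) $ i1)\<^sup>2) = sph_avg (\<lambda>w::real^'n. (w $ i1)\<^sup>2)"
      by (rule sph_avg_perm_sign[OF bij_sw, of "\<lambda>_. 1" "\<lambda>w. (w $ i1)\<^sup>2"]) auto
    then show ?thesis by (simp add: sw_def)
  qed
  have "1 = sph_avg (\<lambda>w::real^'n. \<Sum>j\<in>UNIV. (w $ j)\<^sup>2)"
    using sph_avg_norm_sq[where 'n='n] by (simp add: norm_sq_cart)
  also have "\<dots> = (\<Sum>j\<in>UNIV. sph_avg (\<lambda>w::real^'n. (w $ j)\<^sup>2))"
    using sph_avg_sum[of UNIV "\<lambda>j w. (w $ j)\<^sup>2"] bmf_comp_sq by auto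
  also have "\<dots> = real CARD('n) * sph_avg (\<lambda>w::real^'n. (w $ i1)\<^sup>2)"
    by (subst sum.cong[OF refl eq]) simp
  finally show ?thesis by (simp add: field_simps)
qed

lemma sph_avg_refl:
  fixes f :: "real^'n::finite \<Rightarrow> 'b::{banach,second_countable_topology}"
  assumes [measurable]: "f \<in> borel_measurable borel"
  shows "sph_avg (\<lambda>w. f (\<chi> i. (if i = i1 then -1 else 1) * w $ i)) = sph_avg f"
  using sph_avg_perm_sign[of id "\<lambda>i. if i = i1 then -1 else 1" f] by simp

lemma rf_comp: "(\<chi> i. (if i = i1 then -1 else 1) * w $ i) $ i1 = - ((w::real^'n::finite) $ i1)"
  by simp

definition a2f :: "'n::finite \<Rightarrow> real \<Rightarrow> real^'n \<Rightarrow> real" where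
  "a2f i1 e w = (if e \<le> w $ i1 then (w $ i1)\<^sup>2 else 0)"

lemma a2f_meas[measurable]: "a2f i1 e \<in> borel_measurable borel"
  unfolding a2f_def by measurable

lemma comp_sq_le1: "norm (w::real^'n::finite) \<le> 1 \<Longrightarrow> (w $ j)\<^sup>2 \<le> 1"
proof -
  assume "norm w \<le> 1"
  then have "\<bar>w $ j\<bar> \<le> 1" using component_le_norm_cart[of w j] by linarith
  then show ?thesis using power_le_one[OF abs_ge_zero \<open>\<bar>w $ j\<bar> \<le> 1\<close>, of 2] by simp
qed

lemma bmf_a2f: "bmf (a2f i1 e)"
  by (rule bmfI[where C=1]) (auto simp: a2f_def comp_sq_le1)

lemma alpha2_eq: "alpha2 i1 e = real CARD('n) * sph_avg (a2f i1 e)" for i1 :: "'n::finite"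
  unfolding alpha2_def a2f_def ..

lemma alpha2_0: "alpha2 (i1::'n::finite) 0 = 1/2"
proof -
  define g where "g = (\<lambda>w::real^'n. if 0 \<le> - w $ i1 then (w $ i1)\<^sup>2 else 0)"
  have bg: "bmf g" by (rule bmfI[where C=1]) (auto simp: g_def comp_sq_le1)
  have "sph_avg g = sph_avg (a2f i1 0)"
  proof -
    have e: "(\<lambda>w. a2f i1 0 (\<chi> i. (if i = i1 then -1 else 1) * w $ i)) = g"
      by (rule ext) (simp add: a2f_def g_def)
    show ?thesis using sph_avg_refl[OF a2f_meas[of i1 0], of i1] unfolding e .
  qed
  moreover have "sph_avg (\<lambda>w. a2f i1 0 w + g w) = sph_avg (\<lambda>w::real^'n. (w $ i1)\<^sup>2)"
    by (rule arg_cong[where f=sph_avg]) (auto simp: fun_eq_iff a2f_def g_def)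
  ultimately have "2 * sph_avg (a2f i1 0) = 1 / real CARD('n)"
    using sph_avg_add[OF bmf_a2f bg] second_moment[of i1] by simp
  then show ?thesis by (simp add: alpha2_eq field_simps)
qed

lemma alpha2_1:
  assumes "CARD('n::finite) \<ge> 2"
  shows "alpha2 (i1::'n) 1 = 0"
proof -
  have "II (a2f i1 1) = 0" unfolding II_def
  proof (rule integral_eq_zero_AE)
    show "AE x in lborel. indicat_real (ball 0 1) x *\<^sub>R a2f i1 1 (omg (x::real^'n)) = 0"
      using level_null[OF assms, of i1 1]
    proof eventually_elim
      case (elim x)
      then show ?case using omg_comp_le[of x i1] by (auto simp: a2f_def)
    qed
  qed
  then show ?thesis by (simp add: alpha2_eq sph_avg_II)
qed

lemma II_a2f_lim:
  fixes i1 :: "'n::finite"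
  assumes card: "CARD('n) \<ge> 2" and u: "u \<longlonglongrightarrow> e"
  shows "(\<lambda>n. II (a2f i1 (u n))) \<longlonglongrightarrow> II (a2f i1 e :: real^'n \<Rightarrow> real)"
  unfolding II_def
proof (rule integral_dominated_convergence[where w="indicat_real (ball (0::real^'n) 1)"])
  show "integrable lborel (indicat_real (ball (0::real^'n) 1))" by (rule int_ball_ind)
  show "AE x in lborel. (\<lambda>n. indicat_real (ball 0 1) x *\<^sub>R a2f i1 (u n) (omg x)) \<longlonglongrightarrow>
        indicat_real (ball 0 1) x *\<^sub>R a2f i1 e (omg (x::real^'n))"
    using level_null[OF card, of i1 e]
  proof eventually_elim
    case (elim x)
    have "eventually (\<lambda>n. a2f i1 (u n) (omg x) = a2f i1 e (omg x)) sequentially"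
    proof (cases "omg x $ i1 > e")
      case True
      then have "eventually (\<lambda>n. u n < omg x $ i1) sequentially" by (rule order_tendstoD(2)[OF u])
      then show ?thesis by eventually_elim (use True in \<open>auto simp: a2f_def\<close>)
    next
      case False
      then have "omg x $ i1 < e" using elim by simp
      then have "eventually (\<lambda>n. omg x $ i1 < u n) sequentially" by (rule order_tendstoD(1)[OF u])
      then show ?thesis by eventually_elim (use \<open>omg x $ i1 < e\<close> in \<open>auto simp: a2f_def\<close>)
    qed
    then have "eventually (\<lambda>n. indicat_real (ball 0 1) x *\<^sub>R a2f i1 (u n) (omg x) = indicat_real (ball 0 1) x *\<^sub>R a2f i1 e (omg x)) sequentially"
      by eventually_elim simp
    then show ?case by (rule tendsto_eventually)
  qed
  show "AE x in lborel. norm (indicat_real (ball 0 1) x *\<^sub>R a2f i1 (u n) (omg x)) \<le> indicat_real (ball (0::real^'n) 1) x" for n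
    using comp_sq_le1[OF norm_omg_le] by (intro AE_I2) (auto simp: a2f_def indicator_def)
qed measurable

lemma alpha2_cont:
  fixes i1 :: "'n::finite"
  assumes card: "CARD('n) \<ge> 2"
  shows "continuous_on UNIV (alpha2 i1)"
proof -
  have "continuous (at e within UNIV) (alpha2 i1)" for e
  proof (rule continuous_within_sequentiallyI)
    fix u :: "nat \<Rightarrow> real" assume "u \<longlonglongrightarrow> e"
    from II_a2f_lim[OF card this, of i1]
    have "(\<lambda>n. real CARD('n) * ((1 / VV TYPE('n)) * II (a2f i1 (u n)))) \<longlonglongrightarrow> real CARD('n) * ((1 / VV TYPE('n)) * II (a2f i1 e :: real^'n \<Rightarrow> real))"
      by (intro tendsto_mult tendsto_const)
    then show "(\<lambda>n. alpha2 i1 (u n)) \<longlonglongrightarrow> alpha2 i1 e"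
      by (simp add: alpha2_eq sph_avg_II)
  qed
  then show ?thesis by (simp add: continuous_on_eq_continuous_within)
qed

lemma norm_two_axes:
  assumes "i \<noteq> j"
  shows "norm (a *\<^sub>R axis i 1 + b *\<^sub>R axis j 1 :: real^'n::finite) = sqrt (a\<^sup>2 + b\<^sup>2)"
proof -
  have "orthogonal (a *\<^sub>R axis i (1::real)) (b *\<^sub>R axis j 1 :: real^'n)"
    using assms by (simp add: orthogonal_def inner_axis_axis)
  then have "(norm (a *\<^sub>R axis i 1 + b *\<^sub>R axis j 1 :: real^'n))\<^sup>2 = a\<^sup>2 + b\<^sup>2"
    by (simp add: norm_add_Pythagorean)
  then show ?thesis by (metis norm_ge_zero real_sqrt_unique)
qed

lemma isCont_omg: "x \<noteq> 0 \<Longrightarrow> isCont omg x"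
  unfolding omg_def[abs_def] by (intro continuous_intros) auto

lemma alpha2_strict:
  fixes i1 :: "'n::finite"
  assumes card: "CARD('n) \<ge> 2" and e: "0 \<le> e1" "e1 < e2" "e2 \<le> 1"
  shows "alpha2 i1 e2 < alpha2 i1 e1"
proof -
  obtain j :: 'n where j: "j \<noteq> i1" using exists_other[OF card] by blast
  define g where "g = (\<lambda>w::real^'n. a2f i1 e1 w - a2f i1 e2 w)"
  have bg: "bmf g" unfolding g_def
  proof (rule bmfI[where C=2])
    fix w :: "real^'n" assume "norm w \<le> 1"
    then have "(w $ i1)\<^sup>2 \<le> 1" by (rule comp_sq_le1)
    then show "norm (a2f i1 e1 w - a2f i1 e2 w) \<le> 2" by (auto simp: a2f_def)
  qed measurable
  have g_nonneg: "g w \<ge> 0" for w using e by (auto simp: g_def a2f_def)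
  define lo where "lo = (e1 + e2) / 2"
  define mid where "mid = (lo + e2) / 2"
  have lo: "0 < lo" "lo < mid" "mid < e2" "mid < 1" using e unfolding lo_def mid_def by (simp_all add: field_simps)
  have glo: "g w \<ge> lo\<^sup>2" if "lo < w $ i1" "w $ i1 < e2" for w
  proof -
    have "g w = (w $ i1)\<^sup>2" using that e lo by (auto simp: g_def a2f_def lo_def)
    moreover have "lo\<^sup>2 \<le> (w $ i1)\<^sup>2" using that lo by (intro power_mono) auto
    ultimately show ?thesis by simp
  qed
  define p :: "real^'n" where "p = (1/2) *\<^sub>R (mid *\<^sub>R axis i1 1 + sqrt (1 - mid\<^sup>2) *\<^sub>R axis j 1)"
  have "mid\<^sup>2 < 1" using lo by (simp add: power_less_one_iff abs_square_less_1)
  then have nq: "norm (mid *\<^sub>R axis i1 1 + sqrt (1 - mid\<^sup>2) *\<^sub>R axis j 1 :: real^'n) = 1"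
    using norm_two_axes[OF j[symmetric], of mid "sqrt (1 - mid\<^sup>2)"] by simp
  then have np: "norm p = 1/2" unfolding p_def by simp
  then have p0: "p \<noteq> 0" by auto
  have op: "omg p $ i1 = mid" unfolding omg_def np unfolding p_def using j by (simp add: axis_def)
  define \<eta> where "\<eta> = min (mid - lo) (e2 - mid)"
  have "\<eta> > 0" using lo by (simp add: \<eta>_def)
  with isCont_omg[OF p0] obtain r where r: "r > 0" "\<And>x. dist x p < r \<Longrightarrow> dist (omg x) (omg p) < \<eta>"
    unfolding continuous_at_eps_delta by blast
  define r' where "r' = min r (1/2)"
  have r': "r' > 0" using r by (simp add: r'_def)
  have inU: "x \<in> ball (0::real^'n) 1 \<and> lo\<^sup>2 \<le> g (omg x)" if "x \<in> ball p r'" for x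
  proof
    have "dist x p < r'" using that by (simp add: dist_commute)
    then have dxp: "norm (x - p) < 1/2" "dist x p < r" by (auto simp: r'_def dist_norm)
    have "norm x \<le> norm p + norm (x - p)" by (rule norm_triangle_sub)
    then show "x \<in> ball 0 1" using dxp np by simp
    have "\<bar>omg x $ i1 - omg p $ i1\<bar> \<le> dist (omg x) (omg p)"
      using component_le_norm_cart[of "omg x - omg p" i1] by (simp add: dist_norm)
    then have "\<bar>omg x $ i1 - mid\<bar> < \<eta>" using r(2)[OF dxp(2)] op by simp
    then have "\<bar>omg x $ i1 - mid\<bar> < mid - lo" "\<bar>omg x $ i1 - mid\<bar> < e2 - mid"
      unfolding \<eta>_def by simp_all
    then have "lo < omg x $ i1" "omg x $ i1 < e2" by linarith+
    then show "lo\<^sup>2 \<le> g (omg x)" by (rule glo)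
  qed
  have "0 < lo\<^sup>2 * measure lborel (ball p r')"
  proof -
    have "measure lebesgue (ball p r') > 0" using content_ball_pos[OF r'] by simp
    then show ?thesis using lo by (simp add: measure_completion)
  qed
  also have "\<dots> = integral\<^sup>L lborel (\<lambda>x. indicat_real (ball p r') x * lo\<^sup>2)" by simp
  also have "\<dots> \<le> II g" unfolding II_def
  proof (rule integral_mono)
    show "integrable lborel (\<lambda>x. indicat_real (ball p r') x * lo\<^sup>2)"
      using emeasure_bounded_finite[of "ball p r'"] by (intro integrable_mult_left integrable_real_indicator) auto
    show "integrable lborel (\<lambda>x. indicat_real (ball 0 1) x *\<^sub>R g (omg x))" by (rule bmf_int[OF bg])
    fix x :: "real^'n"
    show "indicat_real (ball p r') x * lo\<^sup>2 \<le> indicat_real (ball 0 1) x *\<^sub>R g (omg x)"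
      using inU[of x] g_nonneg[of "omg x"] by (auto simp: indicator_def)
  qed
  finally have "II g > 0" .
  then have "sph_avg g > 0" using VV_pos[where 'n='n] bmf_meas[OF bg] by (simp add: sph_avg_II)
  then have "sph_avg (a2f i1 e2) < sph_avg (a2f i1 e1)"
    using sph_avg_diff[OF bmf_a2f bmf_a2f, of i1 e1 i1 e2] unfolding g_def by simp
  then show ?thesis by (simp add: alpha2_eq)
qed

lemma den_ge1:
  assumes "Re z \<ge> 0"
  shows "1 \<le> cmod (1 + z + \<i> * complex_of_real B)"
proof -
  have "Re (1 + z + \<i> * complex_of_real B) = 1 + Re z" by simp
  then show ?thesis using abs_Re_le_cmod[of "1 + z + \<i> * complex_of_real B"] assms by linarith
qed

lemma den_pair:
  assumes "Re z \<ge> 0"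
  shows "sqrt (1 + B\<^sup>2) \<le> cmod (1 + z + \<i> * complex_of_real B) \<or> sqrt (1 + B\<^sup>2) \<le> cmod (1 + z + \<i> * complex_of_real (- B))"
proof -
  have c: "cmod (1 + z + \<i> * complex_of_real C) = sqrt ((1 + Re z)\<^sup>2 + (Im z + C)\<^sup>2)" for C
    by (simp add: norm_complex_def)
  have a: "1 \<le> (1 + Re z)\<^sup>2" using assms by (simp add: one_le_power)
  have "B\<^sup>2 \<le> (Im z + B)\<^sup>2 \<or> B\<^sup>2 \<le> (Im z + - B)\<^sup>2"
  proof (cases "Im z * B \<ge> 0")
    case True then show ?thesis by (intro disjI1) (simp add: power2_eq_square algebra_simps add_nonneg_nonneg)
  next
    case False
    then have "0 \<le> - (Im z * B)" by simp
    moreover have "0 \<le> Im z * Im z" by simp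
    moreover have "(Im z + - B)\<^sup>2 - B\<^sup>2 = Im z * Im z + 2 * (- (Im z * B))"
      by (simp add: power2_eq_square algebra_simps)
    ultimately show ?thesis by (intro disjI2) linarith
  qed
  then show ?thesis unfolding c using a by (auto intro!: real_sqrt_le_mono)
qed

lemma inv_sum:
  assumes "Re z \<ge> 0"
  shows "1 / cmod (1 + z + \<i> * complex_of_real B) + 1 / cmod (1 + z + \<i> * complex_of_real (- B)) \<le> 1 + 1 / sqrt (1 + B\<^sup>2)"
proof -
  have s: "sqrt (1 + B\<^sup>2) > 0" by (simp add: add_pos_nonneg)
  have d1: "1 / cmod (1 + z + \<i> * complex_of_real C) \<le> 1" for C
    using den_ge1[OF assms, of C] by (simp add: divide_le_eq_1)
  have d2: "1 / cmod (1 + z + \<i> * complex_of_real C) \<le> 1 / sqrt (1 + B\<^sup>2)" if "sqrt (1 + B\<^sup>2) \<le> cmod (1 + z + \<i> * complex_of_real C)" for C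
    using that s by (intro divide_left_mono) (auto intro!: mult_pos_pos)
  from den_pair[OF assms, of B] show ?thesis
    using d1[of B] d1[of "-B"] d2[of B] d2[of "-B"] by auto
qed

definition fj :: "'n::finite \<Rightarrow> nat \<Rightarrow> complex \<Rightarrow> real \<Rightarrow> real^'n \<Rightarrow> complex" where
  "fj i1 j z b w = complex_of_real ((w $ i1) ^ j) / (1 + z + \<i> * complex_of_real (b * (w $ i1)))"

lemma cj_fj: "cj i1 j z k = sph_avg (fj i1 j z (norm k))"
  unfolding cj_def fj_def ..

lemma fj_meas[measurable]: "fj i1 j z b \<in> borel_measurable borel"
  unfolding fj_def[abs_def] by measurable

lemma fj_norm: "Re z \<ge> 0 \<Longrightarrow> norm (fj i1 j z b w) = \<bar>w $ i1\<bar> ^ j / cmod (1 + z + \<i> * complex_of_real (b * (w $ i1)))"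
  unfolding fj_def by (simp add: norm_divide norm_power)

lemma fj_le1: fixes i1 :: "'n::finite" assumes "Re z \<ge> 0" "norm w \<le> 1" shows "norm (fj i1 j z b w) \<le> 1"
proof -
  from assms(2) have "norm w \<le> 1" .
  then have "\<bar>w $ i1\<bar> \<le> 1" using component_le_norm_cart[of w i1] by linarith
  then have "\<bar>w $ i1\<bar> ^ j \<le> 1" by (simp add: power_le_one)
  moreover have "1 \<le> cmod (1 + z + \<i> * complex_of_real (b * (w $ i1)))" by (rule den_ge1[OF assms(1)])
  ultimately show "norm (fj i1 j z b w) \<le> 1" unfolding fj_norm[OF assms(1)]
    by (simp add: divide_le_eq_1)
qed

lemma bmf_fj: fixes i1 :: "'n::finite" assumes "Re z \<ge> 0" shows "bmf (fj i1 j z b)"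
  by (rule bmfI[where C=1]) (auto intro: fj_le1[OF assms])

definition rf :: "'n::finite \<Rightarrow> real^'n \<Rightarrow> real^'n" where
  "rf i1 w = (\<chi> i. (if i = i1 then -1 else 1) * w $ i)"

lemma rf_i1[simp]: "rf i1 w $ i1 = - (w $ i1)"
  by (simp add: rf_def)

lemma norm_rf[simp]: "norm (rf i1 w) = norm w"
  unfolding rf_def by (rule norm_perm_sign[of id, simplified]) auto

lemma rf_meas[measurable]: "rf i1 \<in> borel_measurable borel"
proof -
  have "linear (rf i1)" unfolding rf_def by (auto simp: linear_iff vec_eq_iff algebra_simps)
  then have "bounded_linear (rf i1)" by (simp add: linear_conv_bounded_linear)
  then show ?thesis by (intro borel_measurable_continuous_onI linear_continuous_on)
qed

lemma sph_avg_rf: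
  fixes f :: "real^'n::finite \<Rightarrow> 'b::{banach,second_countable_topology}"
  assumes [measurable]: "f \<in> borel_measurable borel"
  shows "sph_avg (\<lambda>w. f (rf i1 w)) = sph_avg f"
  unfolding rf_def by (rule sph_avg_refl) fact

lemma bmf_rf: "bmf f \<Longrightarrow> bmf (\<lambda>w. f (rf i1 w))"
  unfolding bmf_def
proof (elim conjE exE, intro conjI exI allI impI)
  fix C assume [measurable]: "f \<in> borel_measurable borel" and C: "\<forall>w. norm w \<le> 1 \<longrightarrow> norm (f w) \<le> C"
  show "(\<lambda>w. f (rf i1 w)) \<in> borel_measurable borel" by measurable
  fix w :: "real^'a" assume "norm w \<le> 1"
  then show "norm (f (rf i1 w)) \<le> C" using C norm_rf[of i1 w] by auto
qed

lemma sph_avg_sym: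
  fixes f :: "real^'n::finite \<Rightarrow> 'b::{banach,second_countable_topology}"
  assumes "bmf f"
  shows "sph_avg f = sph_avg (\<lambda>w. (1/2) *\<^sub>R (f w + f (rf i1 w)))"
proof -
  have m: "(\<lambda>w. f w + f (rf i1 w)) \<in> borel_measurable borel"
    using bmf_meas[OF assms] by measurable
  have "sph_avg (\<lambda>w. (1/2) *\<^sub>R (f w + f (rf i1 w))) = (1/2) *\<^sub>R (sph_avg f + sph_avg (\<lambda>w. f (rf i1 w)))"
    by (simp add: sph_avg_scaleR[OF m] sph_avg_add[OF assms bmf_rf[OF assms]])
  also have "\<dots> = sph_avg f" by (simp add: sph_avg_rf[OF bmf_meas[OF assms]] scaleR_2[symmetric])
  finally show ?thesis ..
qed

lemma sph_avg_quad: "sph_avg (\<lambda>w::real^'n::finite. a * (w $ i1)\<^sup>2 + c) = a / real CARD('n) + c"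
proof -
  have b1: "bmf (\<lambda>w::real^'n. a * (w $ i1)\<^sup>2)"
  proof (rule bmfI[where C="\<bar>a\<bar>"])
    fix w :: "real^'n" assume "norm w \<le> 1"
    then have "(w $ i1)\<^sup>2 \<le> 1" by (rule comp_sq_le1)
    then show "norm (a * (w $ i1)\<^sup>2) \<le> \<bar>a\<bar>" by (simp add: abs_mult mult_left_le)
  qed measurable
  have b2: "bmf (\<lambda>w::real^'n. c)" by (rule bmfI[where C="\<bar>c\<bar>"]) auto
  have "sph_avg (\<lambda>w::real^'n. a * (w $ i1)\<^sup>2) = a * sph_avg (\<lambda>w::real^'n. (w $ i1)\<^sup>2)"
    using sph_avg_scaleR[of "\<lambda>w::real^'n. (w $ i1)\<^sup>2" a] by simp
  then show ?thesis using sph_avg_add[OF b1 b2] by (simp add: sph_avg_const second_moment)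
qed

lemma abs_le_sqrt1: "\<bar>B\<bar> \<le> sqrt (1 + B\<^sup>2)"
  by (metis real_sqrt_abs real_sqrt_le_mono le_add_same_cancel2 zero_le_one)

lemma tri_half: "norm ((1/2) *\<^sub>R (p + q)) \<le> (1/2) * (norm p + norm (q::'a::real_normed_vector))"
  using norm_triangle_ineq[of p q] by simp

lemma c1_point:
  fixes i1 :: "'n::finite"
  assumes z: "Re z \<ge> 0" and b: "b > 0"
  shows "norm ((1/2) *\<^sub>R (fj i1 1 z b w + fj i1 1 z b (rf i1 w)))
     \<le> sqrt (real CARD('n)) / 4 * (w $ i1)\<^sup>2 + (1 / (4 * sqrt (real CARD('n))) + 1 / (2 * b))"
proof -
  define x where "x = w $ i1"
  define B where "B = b * x"
  define cp where "cp = cmod (1 + z + \<i> * complex_of_real B)"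
  define cm where "cm = cmod (1 + z + \<i> * complex_of_real (- B))"
  have n1: "norm (fj i1 1 z b w) = \<bar>x\<bar> / cp" unfolding fj_norm[OF z] x_def cp_def B_def by simp
  have n2: "norm (fj i1 1 z b (rf i1 w)) = \<bar>x\<bar> / cm" unfolding fj_norm[OF z] x_def cm_def B_def by simp
  have "norm ((1/2) *\<^sub>R (fj i1 1 z b w + fj i1 1 z b (rf i1 w))) \<le> (1/2) * (\<bar>x\<bar> / cp + \<bar>x\<bar> / cm)"
    using tri_half[of "fj i1 1 z b w" "fj i1 1 z b (rf i1 w)"] unfolding n1 n2 .
  also have "\<dots> = (\<bar>x\<bar> / 2) * (1 / cp + 1 / cm)" by (simp add: field_simps)
  also have "\<dots> \<le> (\<bar>x\<bar> / 2) * (1 + 1 / sqrt (1 + B\<^sup>2))"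
    using inv_sum[OF z, of B] unfolding cp_def cm_def by (intro mult_left_mono) auto
  also have "\<dots> = \<bar>x\<bar> / 2 + (\<bar>x\<bar> / sqrt (1 + B\<^sup>2)) / 2" by (simp add: field_simps)
  also have "\<dots> \<le> \<bar>x\<bar> / 2 + (1 / b) / 2"
  proof -
    have s: "sqrt (1 + B\<^sup>2) > 0" by (simp add: add_pos_nonneg)
    have "b * \<bar>x\<bar> \<le> sqrt (1 + B\<^sup>2)" using abs_le_sqrt1[of B] b by (simp add: B_def abs_mult)
    then have "\<bar>x\<bar> / sqrt (1 + B\<^sup>2) \<le> 1 / b" using s b by (simp add: field_simps)
    then show ?thesis by simp
  qed
  also have "\<dots> \<le> sqrt (real CARD('n)) / 4 * x\<^sup>2 + (1 / (4 * sqrt (real CARD('n))) + 1 / (2 * b))"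
  proof -
    define r where "r = sqrt (real CARD('n))"
    have r: "r > 0" unfolding r_def by simp
    have rr: "r * r = real CARD('n)" unfolding r_def by simp
    have "0 \<le> (r * \<bar>x\<bar> - 1)\<^sup>2" by simp
    then have "2 * r * \<bar>x\<bar> \<le> r * r * x\<^sup>2 + 1" by (simp add: power2_eq_square algebra_simps)
    then have "\<bar>x\<bar> \<le> (r * r * x\<^sup>2 + 1) / (2 * r)" using r by (simp add: field_simps)
    also have "\<dots> = r / 2 * x\<^sup>2 + 1 / (2 * r)" using r by (simp add: field_simps power2_eq_square)
    finally show ?thesis unfolding r_def[symmetric] by (simp add: field_simps)
  qed
  finally show ?thesis by (simp add: x_def)
qed

lemma c1_bound:
  fixes i1 :: "'n::finite"
  assumes z: "Re z \<ge> 0" and b: "b > 0"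
  shows "norm (sph_avg (fj i1 1 z b)) \<le> 1 / (2 * sqrt (real CARD('n))) + 1 / (2 * b)"
proof -
  let ?h = "\<lambda>w::real^'n. sqrt (real CARD('n)) / 4 * (w $ i1)\<^sup>2 + (1 / (4 * sqrt (real CARD('n))) + 1 / (2 * b))"
  have bh: "bmf ?h"
  proof (rule bmfI[where C="sqrt (real CARD('n)) / 4 + \<bar>1 / (4 * sqrt (real CARD('n))) + 1 / (2 * b)\<bar>"])
    fix w :: "real^'n" assume "norm w \<le> 1"
    then have "(w $ i1)\<^sup>2 \<le> 1" by (rule comp_sq_le1)
    then show "norm (?h w) \<le> sqrt (real CARD('n)) / 4 + \<bar>1 / (4 * sqrt (real CARD('n))) + 1 / (2 * b)\<bar>"
      using b by (auto simp: abs_of_nonneg intro!: add_mono mult_left_le)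
  qed measurable
  have bs: "bmf (\<lambda>w. (1/2) *\<^sub>R (fj i1 1 z b w + fj i1 1 z b (rf i1 w)))"
  proof (rule bmfI[where C=1])
    fix w :: "real^'n" assume w: "norm w \<le> 1"
    have "norm (fj i1 1 z b w) \<le> 1" "norm (fj i1 1 z b (rf i1 w)) \<le> 1"
      using fj_le1[OF z w] fj_le1[OF z, of "rf i1 w"] w by auto
    then have "(1/2) * (norm (fj i1 1 z b w) + norm (fj i1 1 z b (rf i1 w))) \<le> 1" by simp
    then show "norm ((1/2) *\<^sub>R (fj i1 1 z b w + fj i1 1 z b (rf i1 w))) \<le> 1"
      by (rule order_trans[OF tri_half])
  qed measurable
  have "norm (sph_avg (fj i1 1 z b)) = norm (sph_avg (\<lambda>w. (1/2) *\<^sub>R (fj i1 1 z b w + fj i1 1 z b (rf i1 w))))"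
    by (subst sph_avg_sym[OF bmf_fj[OF z], of i1]) rule
  also have "\<dots> \<le> sph_avg ?h"
    by (rule sph_avg_norm[OF bs bh c1_point[OF z b]])
  also have "\<dots> = sqrt (real CARD('n)) / 4 / real CARD('n) + (1 / (4 * sqrt (real CARD('n))) + 1 / (2 * b))"
    by (rule sph_avg_quad)
  also have "\<dots> = 1 / (2 * sqrt (real CARD('n))) + 1 / (2 * b)"
  proof -
    have "sqrt (real CARD('n)) / 4 / real CARD('n) = 1 / (4 * sqrt (real CARD('n)))"
    proof -
      define r where "r = sqrt (real CARD('n))"
      have r: "r > 0" "r * r = real CARD('n)" unfolding r_def by simp_all
      show ?thesis unfolding r_def[symmetric] r(2)[symmetric] using r(1) by (simp add: field_simps)
    qed
    then show ?thesis by simp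
  qed
  finally show ?thesis .
qed

lemma c2_point:
  fixes i1 :: "'n::finite"
  assumes z: "Re z \<ge> 0" and b: "b \<ge> g" and g: "g > 0" and e: "0 < e"
  shows "norm ((1/2) *\<^sub>R (fj i1 2 z b w + fj i1 2 z b (rf i1 w)))
     \<le> (w $ i1)\<^sup>2 - phi2 (e * g) / 2 * (a2f i1 e w + a2f i1 e (rf i1 w))"
proof -
  define x where "x = w $ i1"
  define B where "B = b * x"
  define cp where "cp = cmod (1 + z + \<i> * complex_of_real B)"
  define cm where "cm = cmod (1 + z + \<i> * complex_of_real (- B))"
  have n1: "norm (fj i1 2 z b w) = x\<^sup>2 / cp" unfolding fj_norm[OF z] x_def cp_def B_def by simp
  have n2: "norm (fj i1 2 z b (rf i1 w)) = x\<^sup>2 / cm" unfolding fj_norm[OF z] x_def cm_def B_def by simp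
  have "norm ((1/2) *\<^sub>R (fj i1 2 z b w + fj i1 2 z b (rf i1 w))) \<le> (1/2) * (x\<^sup>2 / cp + x\<^sup>2 / cm)"
    using tri_half[of "fj i1 2 z b w" "fj i1 2 z b (rf i1 w)"] unfolding n1 n2 .
  also have "\<dots> = (x\<^sup>2 / 2) * (1 / cp + 1 / cm)" by (simp add: field_simps)
  also have "\<dots> \<le> (x\<^sup>2 / 2) * (1 + 1 / sqrt (1 + B\<^sup>2))"
    using inv_sum[OF z, of B] unfolding cp_def cm_def by (intro mult_left_mono) auto
  also have "\<dots> \<le> x\<^sup>2 - phi2 (e * g) / 2 * (a2f i1 e w + a2f i1 e (rf i1 w))"
  proof (cases "e \<le> \<bar>x\<bar>")
    case True
    then have sum: "a2f i1 e w + a2f i1 e (rf i1 w) = x\<^sup>2" using e by (auto simp: a2f_def x_def)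
    have "e * g \<le> \<bar>x\<bar> * b" using True b g e by (intro mult_mono) auto
    then have "(e * g)\<^sup>2 \<le> (\<bar>x\<bar> * b)\<^sup>2" using e g by (intro power_mono) auto
    also have "\<dots> = B\<^sup>2" by (simp add: B_def power_mult_distrib)
    finally have "(e * g)\<^sup>2 \<le> B\<^sup>2" .
    then have "sqrt (1 + (e * g)\<^sup>2) \<le> sqrt (1 + B\<^sup>2)" by simp
    then have "1 / sqrt (1 + B\<^sup>2) \<le> 1 / sqrt (1 + (e * g)\<^sup>2)"
      by (intro divide_left_mono) (auto intro!: mult_pos_pos add_pos_nonneg)
    then have "(x\<^sup>2 / 2) * (1 + 1 / sqrt (1 + B\<^sup>2)) \<le> (x\<^sup>2 / 2) * (1 + 1 / sqrt (1 + (e * g)\<^sup>2))"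
      by (intro mult_left_mono) auto
    also have "\<dots> = x\<^sup>2 - phi2 (e * g) / 2 * (a2f i1 e w + a2f i1 e (rf i1 w))"
      unfolding sum phi2_def by (simp add: field_simps)
    finally show ?thesis .
  next
    case False
    then have sum: "a2f i1 e w + a2f i1 e (rf i1 w) = 0" by (auto simp: a2f_def x_def)
    have "0 < 1 + B\<^sup>2" by (simp add: add_pos_nonneg)
    then have "1 / sqrt (1 + B\<^sup>2) \<le> 1" by (simp add: divide_le_eq_1)
    then have "(x\<^sup>2 / 2) * (1 + 1 / sqrt (1 + B\<^sup>2)) \<le> (x\<^sup>2 / 2) * 2"
      by (intro mult_left_mono) auto
    then show ?thesis unfolding sum by simp
  qed
  finally show ?thesis by (simp add: x_def)
qed

lemma c2_bound:
  fixes i1 :: "'n::finite"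
  assumes z: "Re z \<ge> 0" and b: "b \<ge> g" and g: "g > 0" and e: "0 < e"
  shows "real CARD('n) * norm (sph_avg (fj i1 2 z b)) \<le> 1 - alpha2 i1 e * phi2 (e * g)"
proof -
  define P where "P = phi2 (e * g)"
  let ?h = "\<lambda>w::real^'n. (w $ i1)\<^sup>2 - P / 2 * (a2f i1 e w + a2f i1 e (rf i1 w))"
  have ba: "bmf (\<lambda>w. a2f i1 e w + a2f i1 e (rf i1 w))" by (intro bmf_add bmf_a2f bmf_rf)
  have bP: "bmf (\<lambda>w. P / 2 * (a2f i1 e w + a2f i1 e (rf i1 w)))"
  proof -
    obtain C where "\<forall>w. norm w \<le> 1 \<longrightarrow> norm (a2f i1 e w + a2f i1 e (rf i1 w)) \<le> C"
      using ba unfolding bmf_def by blast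
    then show ?thesis
      by (intro bmfI[where C="\<bar>P / 2\<bar> * C"]) (use ba[unfolded bmf_def] in \<open>auto simp: abs_mult intro!: mult_left_mono\<close>)
  qed
  have bh: "bmf ?h" by (rule bmf_diff[OF bmf_comp_sq bP])
  have bs: "bmf (\<lambda>w. (1/2) *\<^sub>R (fj i1 2 z b w + fj i1 2 z b (rf i1 w)))"
  proof (rule bmfI[where C=1])
    fix w :: "real^'n" assume w: "norm w \<le> 1"
    have "norm (fj i1 2 z b w) \<le> 1" "norm (fj i1 2 z b (rf i1 w)) \<le> 1"
      using fj_le1[OF z w] fj_le1[OF z, of "rf i1 w"] w by auto
    then have "(1/2) * (norm (fj i1 2 z b w) + norm (fj i1 2 z b (rf i1 w))) \<le> 1" by simp
    then show "norm ((1/2) *\<^sub>R (fj i1 2 z b w + fj i1 2 z b (rf i1 w))) \<le> 1"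
      by (rule order_trans[OF tri_half])
  qed measurable
  have "norm (sph_avg (fj i1 2 z b)) = norm (sph_avg (\<lambda>w. (1/2) *\<^sub>R (fj i1 2 z b w + fj i1 2 z b (rf i1 w))))"
    by (subst sph_avg_sym[OF bmf_fj[OF z], of i1]) rule
  also have "\<dots> \<le> sph_avg ?h"
    by (rule sph_avg_norm[OF bs bh c2_point[OF z b g e, folded P_def]])
  also have "\<dots> = 1 / real CARD('n) - P * sph_avg (a2f i1 e)"
  proof -
    have "sph_avg ?h = sph_avg (\<lambda>w::real^'n. (w $ i1)\<^sup>2) - sph_avg (\<lambda>w. P / 2 * (a2f i1 e w + a2f i1 e (rf i1 w)))"
      by (rule sph_avg_diff[OF bmf_comp_sq bP])
    also have "sph_avg (\<lambda>w. P / 2 * (a2f i1 e w + a2f i1 e (rf i1 w))) = P / 2 * sph_avg (\<lambda>w. a2f i1 e w + a2f i1 e (rf i1 w))"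
      using sph_avg_scaleR[of "\<lambda>w. a2f i1 e w + a2f i1 e (rf i1 w)" "P/2"] by simp
    also have "sph_avg (\<lambda>w. a2f i1 e w + a2f i1 e (rf i1 w)) = 2 * sph_avg (a2f i1 e)"
      using sph_avg_add[OF bmf_a2f[of i1 e] bmf_rf[OF bmf_a2f[of i1 e], of i1]] sph_avg_rf[OF a2f_meas[of i1 e], of i1] by simp
    finally show ?thesis by (simp add: second_moment)
  qed
  finally have "norm (sph_avg (fj i1 2 z b)) \<le> 1 / real CARD('n) - P * sph_avg (a2f i1 e)" .
  then have "real CARD('n) * norm (sph_avg (fj i1 2 z b)) \<le> real CARD('n) * (1 / real CARD('n) - P * sph_avg (a2f i1 e))"
    by (intro mult_left_mono) auto
  also have "\<dots> = 1 - alpha2 i1 e * P" by (simp add: alpha2_eq field_simps)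
  finally show ?thesis unfolding P_def .
qed

lemma Re_fj0:
  assumes z: "Re z \<ge> 0"
  shows "Re (fj i1 0 z b w) = (1 + Re z) / ((1 + Re z)\<^sup>2 + (Im z + b * w $ i1)\<^sup>2)"
  unfolding fj_def by (simp add: Re_divide power2_eq_square)

lemma Re_fj0_bounds:
  assumes z: "Re z \<ge> 0"
  shows "0 \<le> Re (fj i1 0 z b w)" "Re (fj i1 0 z b w) \<le> 1"
proof -
  define a where "a = 1 + Re z"
  define y where "y = Im z + b * w $ i1"
  have a: "a \<ge> 1" using z by (simp add: a_def)
  have R: "Re (fj i1 0 z b w) = a / (a\<^sup>2 + y\<^sup>2)" unfolding Re_fj0[OF z] a_def y_def ..
  show "0 \<le> Re (fj i1 0 z b w)" unfolding R using a by simp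
  have "a \<le> a\<^sup>2" using a by (simp add: power2_eq_square)
  also have "\<dots> \<le> a\<^sup>2 + y\<^sup>2" by simp
  finally show "Re (fj i1 0 z b w) \<le> 1" unfolding R using a by simp
qed

lemma Re_fj0_res:
  assumes z: "Re z \<ge> 0" and b: "b > 0" and d: "\<delta> > 0"
  shows "Re (fj i1 0 z b w) \<le> (if \<bar>w $ i1 - (- Im z / b)\<bar> < \<delta> then 1 else 0) + 1 / (2 * b * \<delta>)"
proof -
  define a where "a = 1 + Re z"
  define y where "y = Im z + b * w $ i1"
  have a: "a \<ge> 1" using z by (simp add: a_def)
  have R: "Re (fj i1 0 z b w) = a / (a\<^sup>2 + y\<^sup>2)" unfolding Re_fj0[OF z] a_def y_def ..
  have pos: "0 \<le> 1 / (2 * b * \<delta>)" using b d by simp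
  have yy: "w $ i1 - (- Im z / b) = y / b" using b by (simp add: y_def field_simps)
  show ?thesis
  proof (cases "\<bar>y\<bar> < b * \<delta>")
    case True
    then have "\<bar>w $ i1 - (- Im z / b)\<bar> < \<delta>" using b unfolding yy by (simp add: abs_divide field_simps)
    then have ind: "(if \<bar>w $ i1 - (- Im z / b)\<bar> < \<delta> then 1 else 0) = (1::real)" by simp
    show ?thesis unfolding ind using Re_fj0_bounds(2)[OF z, of i1 b w] pos by linarith
  next
    case False
    then have y: "b * \<delta> \<le> \<bar>y\<bar>" by simp
    have "2 * a * \<bar>y\<bar> \<le> a\<^sup>2 + y\<^sup>2"
    proof -
      have "0 \<le> (a - \<bar>y\<bar>)\<^sup>2" by simp
      then show ?thesis by (simp add: power2_eq_square algebra_simps)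
    qed
    have bd: "0 < b * \<delta>" using b d by simp
    have yp: "0 < \<bar>y\<bar>" using y bd by linarith
    have ap: "0 < 2 * a * \<bar>y\<bar>" using a yp by simp
    have "a / (a\<^sup>2 + y\<^sup>2) \<le> a / (2 * a * \<bar>y\<bar>)"
      using a ap \<open>2 * a * \<bar>y\<bar> \<le> a\<^sup>2 + y\<^sup>2\<close> by (intro divide_left_mono) auto
    also have "\<dots> = 1 / (2 * \<bar>y\<bar>)" using a by simp
    also have "\<dots> \<le> 1 / (2 * b * \<delta>)" using y bd yp by (intro divide_left_mono) auto
    finally have "Re (fj i1 0 z b w) \<le> 1 / (2 * b * \<delta>)" unfolding R .
    then show ?thesis by simp
  qed
qed

definition Pr :: "'n::finite \<Rightarrow> real \<Rightarrow> real \<Rightarrow> real" where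
  "Pr i1 t d = sph_avg (\<lambda>w::real^'n. if \<bar>w $ i1 - t\<bar> < d then 1 else 0)"

lemma bmf_ind: "bmf (\<lambda>w::real^'n::finite. if \<bar>w $ i1 - t\<bar> < d then 1 else (0::real))"
  by (rule bmfI[where C=1]) auto

lemma Pr_nonneg: fixes i1 :: "'n::finite" shows "Pr i1 t d \<ge> 0"
proof -
  have "sph_avg (\<lambda>w::real^'n. 0::real) \<le> Pr i1 t d" unfolding Pr_def
  proof (rule sph_avg_mono[OF _ bmf_ind])
    show "bmf (\<lambda>w::real^'n. 0::real)" by (rule bmfI[where C=0]) auto
  qed auto
  then show ?thesis by (simp add: sph_avg_const)
qed

lemma Pr_mono:
  assumes "\<bar>t - t'\<bar> + d \<le> d'"
  shows "Pr i1 t d \<le> Pr i1 t' d'"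
  unfolding Pr_def using assms by (intro sph_avg_mono bmf_ind) auto

lemma Pr_far:
  assumes "\<bar>t\<bar> \<ge> 2" "d \<le> 1"
  shows "Pr (i1::'n::finite) t d = 0"
proof -
  have "sph_avg (\<lambda>w::real^'n. if \<bar>w $ i1 - t\<bar> < d then 1 else (0::real)) \<le> sph_avg (\<lambda>w::real^'n. 0::real)"
  proof (intro sph_avg_mono bmf_ind)
    show "bmf (\<lambda>w::real^'n. 0::real)" by (rule bmfI[where C=0]) auto
    fix w :: "real^'n" assume "norm w \<le> 1"
    then have "\<bar>w $ i1\<bar> \<le> 1" using component_le_norm_cart[of w i1] by linarith
    then show "(if \<bar>w $ i1 - t\<bar> < d then 1 else 0) \<le> (0::real)" using assms by auto
  qed
  then show ?thesis using Pr_nonneg[of i1 t d] sph_avg_const[of "0::real", where 'n='n] unfolding Pr_def by simp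
qed

lemma Pr_lim:
  fixes i1 :: "'n::finite"
  assumes card: "CARD('n) \<ge> 2"
  shows "(\<lambda>n. Pr i1 t (inverse (real (Suc n)))) \<longlonglongrightarrow> 0"
proof -
  let ?s = "\<lambda>n (x::real^'n). indicat_real (ball (0::real^'n) 1) x *\<^sub>R (\<lambda>w::real^'n. if \<bar>w $ i1 - t\<bar> < inverse (real (Suc n)) then 1 else (0::real)) (omg x)"
  have "(\<lambda>n. integral\<^sup>L lborel (?s n)) \<longlonglongrightarrow> integral\<^sup>L lborel (\<lambda>x::real^'n. 0::real)"
  proof (rule Bochner_Integration.integral_dominated_convergence[where w="indicat_real (ball (0::real^'n) 1)"])
    show "integrable lborel (indicat_real (ball (0::real^'n) 1))" by (rule int_ball_ind)
    show "AE x in lborel. (\<lambda>n. ?s n x) \<longlonglongrightarrow> 0"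
      using level_null[OF card, of i1 t]
    proof eventually_elim
      case (elim x)
      then have p: "0 < \<bar>omg x $ i1 - t\<bar>" by simp
      have "eventually (\<lambda>n. inverse (real (Suc n)) < \<bar>omg x $ i1 - t\<bar>) sequentially"
        by (rule order_tendstoD(2)[OF LIMSEQ_inverse_real_of_nat p])
      then have "eventually (\<lambda>n. ?s n x = 0) sequentially" by eventually_elim auto
      then show ?case by (rule tendsto_eventually)
    qed
    show "AE x in lborel. norm (?s n x) \<le> indicat_real (ball (0::real^'n) 1) x" for n
      by (intro AE_I2) (auto simp: indicator_def)
  qed measurable
  then have "(\<lambda>n. (1 / VV TYPE('n)) * II (\<lambda>w::real^'n. if \<bar>w $ i1 - t\<bar> < inverse (real (Suc n)) then 1 else (0::real))) \<longlonglongrightarrow> (1 / VV TYPE('n)) * 0"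
    unfolding II_def by (intro tendsto_mult tendsto_const) simp
  then show ?thesis by (simp add: Pr_def sph_avg_II)
qed

lemma Pr_unif:
  fixes i1 :: "'n::finite"
  assumes card: "CARD('n) \<ge> 2" and eta: "\<eta> > 0"
  shows "\<exists>\<delta>>0. \<forall>t. Pr i1 t \<delta> \<le> \<eta>"
proof (rule ccontr)
  assume "\<not> ?thesis"
  then have ex: "\<forall>\<delta>>0. \<exists>t. Pr i1 t \<delta> > \<eta>" by (auto simp: not_le)
  define d where "d = (\<lambda>n::nat. inverse (real (Suc n)))"
  have dpos: "d n > 0" for n by (simp add: d_def)
  have d1: "d n \<le> 1" for n by (simp add: d_def inverse_le_1_iff)
  define T where "T = (\<lambda>n. SOME t. Pr i1 t (d n) > \<eta>)"
  have T: "Pr i1 (T n) (d n) > \<eta>" for n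
    unfolding T_def using ex dpos[of n] by (auto intro: someI_ex)
  have TS: "T n \<in> {-2..2}" for n
  proof (rule ccontr)
    assume "T n \<notin> {-2..2}"
    then have "\<bar>T n\<bar> \<ge> 2" by auto
    then have "Pr i1 (T n) (d n) = 0" by (rule Pr_far[OF _ d1])
    with T[of n] eta show False by simp
  qed
  obtain l r where l: "l \<in> {-2..2::real}" and r: "strict_mono r" and lim: "(T \<circ> r) \<longlonglongrightarrow> l"
    using compact_imp_seq_compact[OF compact_Icc[of "-2::real" 2]] TS unfolding seq_compact_def by metis
  have "eventually (\<lambda>n. Pr i1 l (d n) < \<eta>) sequentially"
    using order_tendstoD(2)[OF Pr_lim[OF card, of i1 l] eta] unfolding d_def .
  then obtain N where "\<forall>n\<ge>N. Pr i1 l (d n) < \<eta>" unfolding eventually_sequentially by blast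
  then have N: "Pr i1 l (d N) < \<eta>" by simp
  define D where "D = d N"
  have Dp: "D > 0" unfolding D_def by (rule dpos)
  have e1: "eventually (\<lambda>n. \<bar>T (r n) - l\<bar> < D / 2) sequentially"
  proof -
    have "\<forall>e>0. eventually (\<lambda>n. \<bar>T (r n) - l\<bar> < e) sequentially"
      using lim unfolding tendsto_iff dist_real_def by (simp add: o_def)
    then show ?thesis using Dp by (metis half_gt_zero)
  qed
  have "(\<lambda>n. d (r n)) \<longlonglongrightarrow> 0"
    using LIMSEQ_subseq_LIMSEQ[OF LIMSEQ_inverse_real_of_nat r] unfolding d_def o_def .
  then have e2: "eventually (\<lambda>n. d (r n) < D / 2) sequentially"
    using Dp by (intro order_tendstoD(2)) auto
  have "eventually (\<lambda>n. False) sequentially"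
    using e1 e2
  proof eventually_elim
    case (elim n)
    then have "Pr i1 (T (r n)) (d (r n)) \<le> Pr i1 l D" by (intro Pr_mono) auto
    with T[of "r n"] N show False unfolding D_def by simp
  qed
  then show False by simp
qed

lemma bmf_Re_fj0: fixes i1 :: "'n::finite" assumes z: "Re z \<ge> 0" shows "bmf (\<lambda>w::real^'n. Re (fj i1 0 z b w))"
proof (rule bmfI[where C=1])
  fix w :: "real^'n"
  show "norm (Re (fj i1 0 z b w)) \<le> 1" using Re_fj0_bounds[OF z, of i1 b w] by simp
qed simp

lemma Re_c0_bounds:
  fixes i1 :: "'n::finite" and k :: "real^'n"
  assumes z: "Re z \<ge> 0"
  shows "0 \<le> Re (cj i1 0 z k)" "Re (cj i1 0 z k) \<le> 1"
proof -
  have e: "Re (cj i1 0 z k) = sph_avg (\<lambda>w::real^'n. Re (fj i1 0 z (norm k) w))"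
    unfolding cj_fj by (rule sph_avg_Re[OF bmf_fj[OF z]])
  have c0: "bmf (\<lambda>w::real^'n. 0::real)" "bmf (\<lambda>w::real^'n. 1::real)" by (auto intro: bmfI[where C=1])
  have "sph_avg (\<lambda>w::real^'n. 0::real) \<le> sph_avg (\<lambda>w::real^'n. Re (fj i1 0 z (norm k) w))"
    by (rule sph_avg_mono[OF c0(1) bmf_Re_fj0[OF z]]) (simp add: Re_fj0_bounds(1)[OF z])
  then show "0 \<le> Re (cj i1 0 z k)" unfolding e by (simp add: sph_avg_const)
  have "sph_avg (\<lambda>w::real^'n. Re (fj i1 0 z (norm k) w)) \<le> sph_avg (\<lambda>w::real^'n. 1::real)"
    by (rule sph_avg_mono[OF bmf_Re_fj0[OF z] c0(2)]) (simp add: Re_fj0_bounds(2)[OF z])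
  then show "Re (cj i1 0 z k) \<le> 1" unfolding e by (simp add: sph_avg_const)
qed

lemma Re_c0_res:
  fixes i1 :: "'n::finite" and k :: "real^'n"
  assumes z: "Re z \<ge> 0" and b: "norm k > 0" and d: "\<delta> > 0"
  shows "Re (cj i1 0 z k) \<le> Pr i1 (- Im z / norm k) \<delta> + 1 / (2 * norm k * \<delta>)"
proof -
  have e: "Re (cj i1 0 z k) = sph_avg (\<lambda>w::real^'n. Re (fj i1 0 z (norm k) w))"
    unfolding cj_fj by (rule sph_avg_Re[OF bmf_fj[OF z]])
  have bc: "bmf (\<lambda>w::real^'n. 1 / (2 * norm k * \<delta>))" by (rule bmfI) auto
  have "sph_avg (\<lambda>w::real^'n. Re (fj i1 0 z (norm k) w))
     \<le> sph_avg (\<lambda>w::real^'n. (if \<bar>w $ i1 - (- Im z / norm k)\<bar> < \<delta> then 1 else 0) + 1 / (2 * norm k * \<delta>))"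
    by (rule sph_avg_mono[OF bmf_Re_fj0[OF z] bmf_add[OF bmf_ind bc]]) (rule Re_fj0_res[OF z b d])
  also have "\<dots> = Pr i1 (- Im z / norm k) \<delta> + 1 / (2 * norm k * \<delta>)"
    unfolding Pr_def by (subst sph_avg_add[OF bmf_ind bc]) (simp add: sph_avg_const)
  finally show ?thesis unfolding e .
qed

definition UU :: "'n::finite \<Rightarrow> real \<Rightarrow> real" where
  "UU i1 g = Sup {Re (cj i1 0 z k) | z (k::real^'n). 0 \<le> Re z \<and> g \<le> norm k}"

lemma UU_set:
  fixes i1 :: "'n::finite"
  shows "{Re (cj i1 0 z k) | z (k::real^'n). 0 \<le> Re z \<and> g \<le> norm k} \<noteq> {}"
    "bdd_above {Re (cj i1 0 z k) | z (k::real^'n). 0 \<le> Re z \<and> g \<le> norm k}"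
proof -
  have "norm (\<bar>g\<bar> *\<^sub>R axis i1 (1::real) :: real^'n) = \<bar>g\<bar>" by simp
  then have "Re (cj i1 0 0 (\<bar>g\<bar> *\<^sub>R axis i1 1 :: real^'n)) \<in> {Re (cj i1 0 z k) | z (k::real^'n). 0 \<le> Re z \<and> g \<le> norm k}"
    by force
  then show "{Re (cj i1 0 z k) | z (k::real^'n). 0 \<le> Re z \<and> g \<le> norm k} \<noteq> {}" by blast
  show "bdd_above {Re (cj i1 0 z k) | z (k::real^'n). 0 \<le> Re z \<and> g \<le> norm k}"
    by (rule bdd_aboveI[where M=1]) (auto intro: Re_c0_bounds)
qed

lemma UU_upper:
  fixes i1 :: "'n::finite" and k :: "real^'n"
  assumes "Re z \<ge> 0" "g \<le> norm k"
  shows "Re (cj i1 0 z k) \<le> UU i1 g"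
  unfolding UU_def by (rule cSup_upper[OF _ UU_set(2)]) (use assms in blast)

lemma UU_bounds:
  fixes i1 :: "'n::finite"
  shows "0 \<le> UU i1 g" "UU i1 g \<le> 1"
proof -
  have "norm (\<bar>g\<bar> *\<^sub>R axis i1 (1::real) :: real^'n) = \<bar>g\<bar>" by simp
  then have "Re (cj i1 0 0 (\<bar>g\<bar> *\<^sub>R axis i1 1 :: real^'n)) \<le> UU i1 g" by (intro UU_upper) auto
  moreover have "0 \<le> Re (cj i1 0 0 (\<bar>g\<bar> *\<^sub>R axis i1 1 :: real^'n))" by (rule Re_c0_bounds) simp
  ultimately show "0 \<le> UU i1 g" by linarith
  show "UU i1 g \<le> 1" unfolding UU_def by (rule cSup_least[OF UU_set(1)]) (auto intro: Re_c0_bounds)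
qed

lemma UU_anti:
  fixes i1 :: "'n::finite"
  assumes "g \<le> g'"
  shows "UU i1 g' \<le> UU i1 g"
  unfolding UU_def by (rule cSup_subset_mono[OF UU_set(1) UU_set(2)]) (use assms in force)

lemma UU_lim:
  fixes i1 :: "'n::finite"
  assumes card: "CARD('n) \<ge> 2" and eta: "\<eta> > 0"
  shows "\<exists>G>0. \<forall>g\<ge>G. UU i1 g \<le> \<eta>"
proof -
  obtain \<delta> where d: "\<delta> > 0" and P: "\<And>t. Pr i1 t \<delta> \<le> \<eta> / 2" using Pr_unif[OF card, of "\<eta>/2" i1] eta by auto
  define G where "G = 1 / (\<eta> * \<delta>)"
  have G: "G > 0" using eta d by (simp add: G_def)
  show ?thesis
  proof (intro exI[of _ G] conjI allI impI G)
    fix g assume g: "G \<le> g"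
    show "UU i1 g \<le> \<eta>" unfolding UU_def
    proof (rule cSup_least[OF UU_set(1)])
      fix x assume "x \<in> {Re (cj i1 0 z k) | z (k::real^'n). 0 \<le> Re z \<and> g \<le> norm k}"
      then obtain z and k :: "real^'n" where x: "x = Re (cj i1 0 z k)" and z: "0 \<le> Re z" and k: "g \<le> norm k" by blast
      have kp: "norm k > 0" using G g k by linarith
      have "x \<le> Pr i1 (- Im z / norm k) \<delta> + 1 / (2 * norm k * \<delta>)" unfolding x by (rule Re_c0_res[OF z kp d])
      also have "1 / (2 * norm k * \<delta>) \<le> \<eta> / 2"
      proof -
        have "G \<le> norm k" using g k by linarith
        then have "1 / (\<eta> * \<delta>) \<le> norm k" unfolding G_def .
        then have "1 \<le> norm k * (\<eta> * \<delta>)" using eta d by (simp add: field_simps)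
        then show ?thesis using kp d eta by (simp add: field_simps)
      qed
      finally show "x \<le> \<eta>" using P[of "- Im z / norm k"] by linarith
    qed
  qed
qed

lemma minorant:
  fixes h :: "real \<Rightarrow> real"
  assumes h01: "\<And>t. 0 \<le> h t" "\<And>t. h t \<le> 1" and h0: "h 0 = 0"
    and hmono: "\<And>s t. 0 \<le> s \<Longrightarrow> s \<le> t \<Longrightarrow> h s \<le> h t"
    and hlim: "\<And>\<eta>. \<eta> > 0 \<Longrightarrow> \<exists>G. \<forall>t\<ge>G. 1 - \<eta> \<le> h t"
  shows "\<exists>\<phi>::real\<Rightarrow>real. (\<forall>g\<ge>0. 0 \<le> \<phi> g \<and> \<phi> g < 1) \<and> continuous_on {0..} \<phi> \<and> mono_on {0..} \<phi> \<and>
      \<phi> 0 = 0 \<and> (\<phi> \<longlongrightarrow> 1) at_top \<and> (\<forall>g\<ge>0. \<phi> g \<le> h g)"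
proof -
  define A where "A = (\<lambda>g. (\<lambda>t. h t + \<bar>g - t\<bar>) ` {0::real..})"
  define \<psi> where "\<psi> = (\<lambda>g. Inf (A g))"
  have Ane: "A g \<noteq> {}" for g unfolding A_def by auto
  have Abdd: "bdd_below (A g)" for g unfolding A_def by (rule bdd_belowI[where m=0]) (auto intro: add_nonneg_nonneg h01)
  have psi_lower: "\<psi> g \<le> h t + \<bar>g - t\<bar>" if "t \<ge> 0" for g t
    unfolding \<psi>_def by (rule cInf_lower[OF _ Abdd]) (use that in \<open>auto simp: A_def\<close>)
  have psi_greatest: "c \<le> \<psi> g" if "\<And>t. t \<ge> 0 \<Longrightarrow> c \<le> h t + \<bar>g - t\<bar>" for c g
    unfolding \<psi>_def by (rule cInf_greatest[OF Ane]) (use that in \<open>auto simp: A_def\<close>)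
  have psi_h: "\<psi> g \<le> h g" if "g \<ge> 0" for g using psi_lower[OF that, of g] by simp
  have psi0: "0 \<le> \<psi> g" for g by (rule psi_greatest) (auto intro: add_nonneg_nonneg h01)
  have psi1: "\<psi> g \<le> 1" if "g \<ge> 0" for g using psi_h[OF that] h01(2)[of g] by linarith
  have lip: "\<psi> g \<le> \<psi> g' + \<bar>g - g'\<bar>" for g g'
  proof -
    have "\<psi> g - \<bar>g - g'\<bar> \<le> \<psi> g'"
    proof (rule psi_greatest)
      fix t :: real assume t: "t \<ge> 0"
      have "\<psi> g \<le> h t + \<bar>g - t\<bar>" by (rule psi_lower[OF t])
      then show "\<psi> g - \<bar>g - g'\<bar> \<le> h t + \<bar>g' - t\<bar>" by linarith
    qed
    then show ?thesis by linarith
  qed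
  have cont: "continuous_on {0..} \<psi>"
  proof (rule lipschitz_on_continuous_on[where L=1], rule lipschitz_onI)
    fix x y :: real
    show "dist (\<psi> x) (\<psi> y) \<le> 1 * dist x y"
      using lip[of x y] lip[of y x] by (simp add: dist_real_def abs_le_iff abs_minus_commute)
  qed simp
  have mono: "\<psi> g \<le> \<psi> g'" if "0 \<le> g" "g \<le> g'" for g g'
  proof (rule psi_greatest)
    fix t :: real assume t: "t \<ge> 0"
    show "\<psi> g \<le> h t + \<bar>g' - t\<bar>"
    proof (cases "g \<le> t")
      case True
      then have "\<psi> g \<le> h t" using psi_h[OF that(1)] hmono[OF that(1) True] by linarith
      then show ?thesis by linarith
    next
      case False
      then show ?thesis using psi_lower[OF t, of g] that by linarith
    qed
  qed
  have psi00: "\<psi> 0 = 0" using psi_h[of 0] psi0[of 0] h0 by simp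
  have psi_big: "min (h (g / 2)) (g / 2) \<le> \<psi> g" if "g \<ge> 0" for g
  proof (rule psi_greatest)
    fix t :: real assume t: "t \<ge> 0"
    show "min (h (g / 2)) (g / 2) \<le> h t + \<bar>g - t\<bar>"
    proof (cases "g / 2 \<le> t")
      case True
      then have "h (g/2) \<le> h t" using that by (intro hmono) auto
      then show ?thesis by (simp add: min.coboundedI1 add_increasing2)
    next
      case False
      then have "g / 2 \<le> \<bar>g - t\<bar>" by linarith
      then show ?thesis using h01(1)[of t] by (simp add: min.coboundedI2)
    qed
  qed
  have psi_lim: "(\<psi> \<longlongrightarrow> 1) at_top"
  proof (rule tendstoI)
    fix e :: real assume e: "e > 0"
    obtain G where G: "\<And>t. t \<ge> G \<Longrightarrow> 1 - e / 2 \<le> h t" using hlim[of "e/2"] e by auto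
    have "\<forall>g\<ge>max (2 * G) 2. dist (\<psi> g) 1 < e"
    proof (intro allI impI)
      fix g :: real assume g: "max (2 * G) 2 \<le> g"
      then have g0: "g \<ge> 0" by simp
      have "1 - e / 2 \<le> h (g / 2)" using g by (intro G) simp
      moreover have "1 - e / 2 \<le> g / 2" using g e by simp
      ultimately have "1 - e / 2 \<le> \<psi> g" using psi_big[OF g0] by linarith
      then show "dist (\<psi> g) 1 < e" using psi1[OF g0] e by (simp add: dist_real_def)
    qed
    then show "eventually (\<lambda>g. dist (\<psi> g) 1 < e) at_top" unfolding eventually_at_top_linorder by blast
  qed
  define q where "q = (\<lambda>g::real. g / (1 + g))"
  have q01: "0 \<le> q g" "q g < 1" if "g \<ge> 0" for g using that by (auto simp: q_def)
  have qmono: "q g \<le> q g'" if "0 \<le> g" "g \<le> g'" for g g' using that by (simp add: q_def field_simps)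
  have qcont: "continuous_on {0..} q" unfolding q_def by (intro continuous_intros) auto
  have qlim: "(q \<longlongrightarrow> 1) at_top"
  proof -
    have "filterlim (\<lambda>g::real. 1 + g) at_top at_top"
      by (rule filterlim_tendsto_add_at_top[OF tendsto_const filterlim_ident])
    then have "((\<lambda>g::real. inverse (1 + g)) \<longlongrightarrow> 0) at_top" by (rule tendsto_inverse_0_at_top)
    then have "((\<lambda>g::real. 1 - inverse (1 + g)) \<longlongrightarrow> 1 - 0) at_top" by (intro tendsto_diff tendsto_const)
    moreover have "eventually (\<lambda>g. 1 - inverse (1 + g) = q g) at_top"
      unfolding eventually_at_top_linorder q_def by (intro exI[of _ 0]) (auto simp: field_simps)
    ultimately show ?thesis by (simp add: tendsto_cong)
  qed
  define \<phi> where "\<phi> = (\<lambda>g. \<psi> g * q g)"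
  show ?thesis
  proof (intro exI[of _ \<phi>] conjI allI impI)
    fix g :: real assume g: "g \<ge> 0"
    show "0 \<le> \<phi> g" unfolding \<phi>_def using psi0[of g] q01[OF g] by simp
    have "\<psi> g * q g \<le> 1 * q g" using psi1[OF g] q01[OF g] by (intro mult_right_mono) auto
    then show "\<phi> g < 1" unfolding \<phi>_def using q01[OF g] by linarith
    have "\<psi> g * q g \<le> \<psi> g" using psi0[of g] q01[OF g] by (simp add: mult_left_le)
    then show "\<phi> g \<le> h g" unfolding \<phi>_def using psi_h[OF g] by linarith
  next
    show "continuous_on {0..} \<phi>" unfolding \<phi>_def by (intro continuous_on_mult cont qcont)
  next
    show "mono_on {0..} \<phi>"
    proof (rule mono_onI)
      fix g g' :: real assume "g \<in> {0..}" "g' \<in> {0..}" "g \<le> g'"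
      then show "\<phi> g \<le> \<phi> g'" unfolding \<phi>_def
        by (intro mult_mono mono qmono psi0 q01(1)) auto
    qed
  next
    show "\<phi> 0 = 0" unfolding \<phi>_def by (simp add: psi00)
  next
    show "(\<phi> \<longlongrightarrow> 1) at_top" unfolding \<phi>_def using tendsto_mult[OF psi_lim qlim] by simp
  qed
qed

lemma lattice_norm:
  fixes k :: "real^'n::finite"
  assumes "k \<in> scaled_lattice \<gamma>" "k \<noteq> 0" "\<gamma> > 0"
  shows "\<gamma> \<le> norm k"
proof -
  obtain j where j: "k $ j \<noteq> 0" using assms(2) by (auto simp: vec_eq_iff)
  obtain m :: int where m: "k $ j = \<gamma> * of_int m" using assms(1) unfolding scaled_lattice_def by blast
  have "m \<noteq> 0" using j m by auto
  then have "1 \<le> \<bar>real_of_int m\<bar>" by linarith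
  then have "\<gamma> \<le> \<gamma> * \<bar>real_of_int m\<bar>" using assms(3) by simp
  also have "\<dots> = \<bar>k $ j\<bar>" using m assms(3) by (simp add: abs_mult)
  also have "\<dots> \<le> norm k" by (rule component_le_norm_cart)
  finally show ?thesis .
qed

theorem lemma3:
  fixes i1 :: "'n::finite"
  assumes "CARD('n) \<ge> 2"
  shows "(\<exists>\<phi>0 :: real \<Rightarrow> real.
      (\<forall>g\<ge>0. 0 \<le> \<phi>0 g \<and> \<phi>0 g < 1) \<and>
      continuous_on {0..} \<phi>0 \<and> mono_on {0..} \<phi>0 \<and> \<phi>0 0 = 0 \<and>
      (\<phi>0 \<longlongrightarrow> 1) at_top \<and>
      (\<forall>\<gamma>>0. \<forall>z::complex. \<forall>k::real^'n.
         Re z \<ge> 0 \<longrightarrow> k \<in> scaled_lattice \<gamma> \<longrightarrow> k \<noteq> 0 \<longrightarrow>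
           Re (cj i1 0 z k) \<le> 1 - \<phi>0 \<gamma> \<and>
           norm (cj i1 1 z k) \<le> 1 / (2 * sqrt (real CARD('n))) + 1 / \<gamma> \<and>
           (\<forall>\<epsilon>. 0 < \<epsilon> \<and> \<epsilon> < 1 \<longrightarrow>
              real CARD('n) * norm (cj i1 2 z k) \<le> 1 - alpha2 i1 \<epsilon> * phi2 (\<epsilon> * \<gamma>)))) \<and>
    continuous_on {0..1} (alpha2 i1) \<and>
    strict_antimono_on {0..1} (alpha2 i1) \<and>
    alpha2 i1 0 = 1/2 \<and> alpha2 i1 1 = 0"
proof -
  note card = assms
  define h where "h = (\<lambda>t. if t \<le> 0 then 0 else 1 - UU i1 t)"
  have h01: "0 \<le> h t" "h t \<le> 1" for t unfolding h_def using UU_bounds[of i1 t] by auto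
  have h0: "h 0 = 0" by (simp add: h_def)
  have hmono: "h s \<le> h t" if "0 \<le> s" "s \<le> t" for s t
    using that UU_anti[of s t i1] h01[of t] unfolding h_def by auto
  have hlim: "\<exists>G. \<forall>t\<ge>G. 1 - \<eta> \<le> h t" if eta: "\<eta> > 0" for \<eta>
  proof -
    obtain G where G: "G > 0" "\<And>g. g \<ge> G \<Longrightarrow> UU i1 g \<le> \<eta>" using UU_lim[OF card eta, of i1] by blast
    show ?thesis by (rule exI[of _ G]) (use G in \<open>auto simp: h_def\<close>)
  qed
  obtain \<phi> :: "real \<Rightarrow> real" where \<phi>: "\<forall>g\<ge>0. 0 \<le> \<phi> g \<and> \<phi> g < 1" "continuous_on {0..} \<phi>"
      "mono_on {0..} \<phi>" "\<phi> 0 = 0" "(\<phi> \<longlongrightarrow> 1) at_top" "\<forall>g\<ge>0. \<phi> g \<le> h g"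
    using minorant[of h, OF h01 h0 hmono hlim] by blast
  have main: "Re (cj i1 0 z k) \<le> 1 - \<phi> \<gamma> \<and>
           norm (cj i1 1 z k) \<le> 1 / (2 * sqrt (real CARD('n))) + 1 / \<gamma> \<and>
           (\<forall>\<epsilon>. 0 < \<epsilon> \<and> \<epsilon> < 1 \<longrightarrow>
              real CARD('n) * norm (cj i1 2 z k) \<le> 1 - alpha2 i1 \<epsilon> * phi2 (\<epsilon> * \<gamma>))"
    if g: "\<gamma> > 0" and z: "Re z \<ge> 0" and k: "k \<in> scaled_lattice \<gamma>" "k \<noteq> (0::real^'n)" for \<gamma> z k
  proof (intro conjI allI impI)
    have nk: "\<gamma> \<le> norm k" by (rule lattice_norm[OF k g])
    then have nkp: "norm k > 0" using g by linarith
    have "Re (cj i1 0 z k) \<le> UU i1 \<gamma>" by (rule UU_upper[OF z nk])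
    also have "\<dots> = 1 - h \<gamma>" using g by (simp add: h_def)
    also have "\<dots> \<le> 1 - \<phi> \<gamma>" using \<phi>(6) g by auto
    finally show "Re (cj i1 0 z k) \<le> 1 - \<phi> \<gamma>" .
    have "norm (cj i1 1 z k) \<le> 1 / (2 * sqrt (real CARD('n))) + 1 / (2 * norm k)"
      unfolding cj_fj by (rule c1_bound[OF z nkp])
    also have "1 / (2 * norm k) \<le> 1 / \<gamma>"
    proof -
      have "\<gamma> \<le> 2 * norm k" using nk nkp by linarith
      then show ?thesis using g nkp by (intro divide_left_mono) auto
    qed
    finally show "norm (cj i1 1 z k) \<le> 1 / (2 * sqrt (real CARD('n))) + 1 / \<gamma>" by simp
    fix \<epsilon> :: real assume e: "0 < \<epsilon> \<and> \<epsilon> < 1"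
    show "real CARD('n) * norm (cj i1 2 z k) \<le> 1 - alpha2 i1 \<epsilon> * phi2 (\<epsilon> * \<gamma>)"
      unfolding cj_fj by (rule c2_bound[OF z nk g]) (use e in simp)
  qed
  show ?thesis
  proof (intro conjI)
    show "\<exists>\<phi>0 :: real \<Rightarrow> real.
      (\<forall>g\<ge>0. 0 \<le> \<phi>0 g \<and> \<phi>0 g < 1) \<and>
      continuous_on {0..} \<phi>0 \<and> mono_on {0..} \<phi>0 \<and> \<phi>0 0 = 0 \<and>
      (\<phi>0 \<longlongrightarrow> 1) at_top \<and>
      (\<forall>\<gamma>>0. \<forall>z::complex. \<forall>k::real^'n.
         Re z \<ge> 0 \<longrightarrow> k \<in> scaled_lattice \<gamma> \<longrightarrow> k \<noteq> 0 \<longrightarrow>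
           Re (cj i1 0 z k) \<le> 1 - \<phi>0 \<gamma> \<and>
           norm (cj i1 1 z k) \<le> 1 / (2 * sqrt (real CARD('n))) + 1 / \<gamma> \<and>
           (\<forall>\<epsilon>. 0 < \<epsilon> \<and> \<epsilon> < 1 \<longrightarrow>
              real CARD('n) * norm (cj i1 2 z k) \<le> 1 - alpha2 i1 \<epsilon> * phi2 (\<epsilon> * \<gamma>)))"
      using \<phi>(1-5) main by blast
    show "continuous_on {0..1} (alpha2 i1)"
      by (rule continuous_on_subset[OF alpha2_cont[OF card]]) simp
    show "strict_antimono_on {0..1} (alpha2 i1)"
    proof (rule monotone_onI)
      fix x y :: real assume "x \<in> {0..1}" "y \<in> {0..1}" "x < y"
      then show "alpha2 i1 y < alpha2 i1 x" by (intro alpha2_strict[OF card]) auto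
    qed
    show "alpha2 i1 0 = 1/2" by (rule alpha2_0)
    show "alpha2 i1 1 = 0" by (rule alpha2_1[OF card])
  qed
qed

end
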